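(* Let $r\in\mathbb{N}$ with $r\ge2$, $v\in\mathbb{YF}^{r,+}_\infty$, $\beta\in(0,1]$ and $u\in\mathbb{YF}$. Then $$\sum_{w\in S_r(u)}\mu_{r,v,\beta}(w)=\mu_{s(v),\beta}(u),$$ where $S_r(u)=\{w\in\mathbb{YF}^r:s(w)=u\}$.
   Context: Fix $r\in\mathbb{N}$. Words and statistics. Consider finite words over $\{1_1,\dots,1_r,2\}$. A letter $1_i$ is a one with digit value $1$; $2$ is a two with digit value $2$. $\varepsilon$ is the empty word. $|x|$ is the sum of digit values, $d(x)$ the number of twos. The graph $\mathbb{YF}^r$. It is the graded graph on all finite words, graded by $|\cdot|$. From $x$ there is a downward edge to every word obtained by one of two operations: (i) delete the leftmost one; (ii) replace a $2$ lying left of the leftmost one (any $2$ if there are no ones) by $1_i$, with arbitrary $i$. $\mathbb{YF}=\mathbb{YF}^1$ (with $1:=1_1$). $s$ replaces every $1_i$ by $1$, for finite and infinite words alike. Path counts. $d_r(x,y)$ is the number of downward paths $y=y_n\to\dots\to y_m=x$ with $|y_i|=i$. Infinite words. $\mathbb{YF}^r_\infty$ is the set of left-infinite words $\dots\alpha_2\alpha_1$. The function $g$. Write $x=\dots2\,1^{\beta_m}\,2\cdots2\,1^{\beta_1}\,2\,1^{\beta_0}$, where $1^\beta$ is a possibly empty block of $\beta$ ones. For $1\le j\le d(x)$ set $g(x,j)=\beta_0+\dots+\beta_{j-1}+2j-1$. The function $\pi$. Set $\pi(x)=\prod_{j:g(x,j)>1}\frac{g(x,j)-1}{g(x,j)}$;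 note $\pi(x)=\pi(s(x))$. Let $\mathbb{YF}^{r,+}_\infty=\{v:\pi(v)>0\}$. Letterwise convergence. $v_n\to v$ letterwise means: for every $k$ and all large $n$, the last $k$ letters of $v_n$ equal the last $k$ letters of $v$. The measures $\mu_{r,v,\beta}$. For $v\in\mathbb{YF}^{r,+}_\infty$ and $\beta\in(0,1]$ there exist finite $v_n\to v$ letterwise with $\pi(v_n)\to\beta\pi(v)$. For any such sequence and any finite $w$, the limit $\lim_n d_r(\varepsilon,w)d_r(w,v_n)/d_r(\varepsilon,v_n)$ exists and depends only on $w,v,\beta$ (proved in the paper). It is denoted $\mu_{r,v,\beta}(w)$. For $r=1$ (the graph $\mathbb{YF}$) we write $\mu_{v,\beta}=\mu_{1,v,\beta}$. *)

theory Defs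
  imports Complex_Main
begin

(* Letters: One i is the one 1_i (i \<in> {1..r}); Two is the two. *)
datatype letter = One nat | Two

(* Finite words: lists, the head is the LEFTMOST letter. *)
type_synonym word = "letter list"

(* Left-infinite words ...a_2 a_1: v p is the (p+1)-th letter from the right, i.e. v 0 = a_1. *)
type_synonym iword = "nat \<Rightarrow> letter"

definition letter_ok :: "nat \<Rightarrow> letter \<Rightarrow> bool" where
  "letter_ok r l \<longleftrightarrow> l = Two \<or> (\<exists>i. 1 \<le> i \<and> i \<le> r \<and> l = One i)"

definition wf_word :: "nat \<Rightarrow> word \<Rightarrow> bool" where
  "wf_word r x \<longleftrightarrow> (\<forall>l\<in>set x. letter_ok r l)"

definition wf_iword :: "nat \<Rightarrow> iword \<Rightarrow> bool" where
  "wf_iword r v \<longleftrightarrow> (\<forall>p. letter_ok r (v p))"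

fun lval :: "letter \<Rightarrow> nat" where
  "lval (One i) = 1"
| "lval Two = 2"

definition wsize :: "word \<Rightarrow> nat" where
  "wsize x = sum_list (map lval x)"

definition dcount :: "word \<Rightarrow> nat" where
  "dcount x = length (filter (\<lambda>l. l = Two) x)"

fun sl :: "letter \<Rightarrow> letter" where
  "sl (One i) = One 1"
| "sl Two = Two"

definition s_word :: "word \<Rightarrow> word" where
  "s_word x = map sl x"

definition s_iword :: "iword \<Rightarrow> iword" where
  "s_iword v = (\<lambda>p. sl (v p))"

(* downward neighbours of x in YF^r:
   (i) delete the leftmost one;
   (ii) replace a 2 lying left of the leftmost one (any 2 if there are no ones) by 1_i. *)
definition down :: "nat \<Rightarrow> word \<Rightarrow> word set" where
  "down r x =
     {y. \<exists>j<length x. (\<forall>k<j. x ! k = Two) \<and> x ! j \<noteq> Two \<and> y = take j x @ drop (Suc j) x}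
   \<union> {y. \<exists>j<length x. \<exists>i. (\<forall>k<j. x ! k = Two) \<and> x ! j = Two \<and> 1 \<le> i \<and> i \<le> r
                \<and> y = x[j := One i]}"

(* d_r(x,y): number of downward paths y = y_n \<rightarrow> ... \<rightarrow> y_m = x with |y_i| = i.
   A path is the list [y_n, y_(n-1), ..., y_m]. *)
definition dpaths :: "nat \<Rightarrow> word \<Rightarrow> word \<Rightarrow> nat" where
  "dpaths r x y = card {ps :: word list. ps \<noteq> [] \<and> hd ps = y \<and> last ps = x
      \<and> (\<forall>i. Suc i < length ps \<longrightarrow> ps ! Suc i \<in> down r (ps ! i))
      \<and> (\<forall>i<length ps. wsize (ps ! i) + i = wsize y)}"

(* The j-th two counted from the right sits at position p (from the right,
   0-based); g(x,j) = beta_0 + ... + beta_(j-1) + 2j - 1 = (sum of the digit values of the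
   last p+1 letters) - 1. *)
definition twopos_inf :: "iword \<Rightarrow> nat \<Rightarrow> nat" where
  "twopos_inf v j = (THE p. v p = Two \<and> card {k. k < p \<and> v k = Two} = j - 1)"

definition has_two_inf :: "iword \<Rightarrow> nat \<Rightarrow> bool" where
  "has_two_inf v j \<longleftrightarrow> 1 \<le> j \<and> (\<exists>p. v p = Two \<and> card {k. k < p \<and> v k = Two} = j - 1)"

definition g_inf :: "iword \<Rightarrow> nat \<Rightarrow> nat" where
  "g_inf v j = (\<Sum>k\<le>twopos_inf v j. lval (v k)) - 1"

definition twopos_fin :: "word \<Rightarrow> nat \<Rightarrow> nat" where
  "twopos_fin x j = (THE p. p < length x \<and> rev x ! p = Two
                          \<and> card {k. k < p \<and> rev x ! k = Two} = j - 1)"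

definition g_fin :: "word \<Rightarrow> nat \<Rightarrow> nat" where
  "g_fin x j = (\<Sum>k\<le>twopos_fin x j. lval (rev x ! k)) - 1"

definition pi_fin :: "word \<Rightarrow> real" where
  "pi_fin x = (\<Prod>j\<in>{j. 1 \<le> j \<and> j \<le> dcount x \<and> g_fin x j > 1}.
                  (real (g_fin x j) - 1) / real (g_fin x j))"

(* \<pi> for left-infinite words: the (possibly infinite) product, as the limit of the
   partial products over j \<le> N (these are non-increasing and nonnegative). *)
definition pi_inf :: "iword \<Rightarrow> real" where
  "pi_inf v = lim (\<lambda>N. \<Prod>j\<in>{j. j \<le> N \<and> has_two_inf v j \<and> g_inf v j > 1}.
                  (real (g_inf v j) - 1) / real (g_inf v j))"

definition YF_plus :: "nat \<Rightarrow> iword set" where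
  "YF_plus r = {v. wf_iword r v \<and> pi_inf v > 0}"

definition letterwise :: "(nat \<Rightarrow> word) \<Rightarrow> iword \<Rightarrow> bool" where
  "letterwise vs v \<longleftrightarrow> (\<forall>k. eventually (\<lambda>n. k \<le> length (vs n) \<and> (\<forall>p<k. rev (vs n) ! p = v p)) sequentially)"

(* \<mu>_{r,v,\<beta>}(w): the common limit over all admissible approximating sequences
   (existence and independence are proved in the paper) *)
definition mu :: "nat \<Rightarrow> iword \<Rightarrow> real \<Rightarrow> word \<Rightarrow> real" where
  "mu r v \<beta> w = (THE L. \<forall>vs. (\<forall>n. wf_word r (vs n)) \<and> letterwise vs v
        \<and> (\<lambda>n. pi_fin (vs n)) \<longlonglongrightarrow> \<beta> * pi_inf v
        \<longrightarrow> (\<lambda>n. real (dpaths r [] w) * real (dpaths r w (vs n)) / real (dpaths r [] (vs n)))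
              \<longlonglongrightarrow> L)"

definition S_set :: "nat \<Rightarrow> word \<Rightarrow> word set" where
  "S_set r u = {w. wf_word r w \<and> s_word w = u}"

end

theory Submission
  imports Defs
begin

lemma wsize_Nil[simp]: "wsize [] = 0" by (simp add: wsize_def)
lemma wsize_Cons[simp]: "wsize (l # x) = lval l + wsize x" by (simp add: wsize_def)
lemma wsize_append[simp]: "wsize (x @ y) = wsize x + wsize y" by (simp add: wsize_def)
lemma lval_pos: "lval l \<ge> 1" by (cases l) auto
lemma lval_le2: "lval l \<le> 2" by (cases l) auto
lemma dcount_Nil[simp]: "dcount [] = 0" by (simp add: dcount_def)
lemma dcount_Cons[simp]: "dcount (l # x) = (if l = Two then Suc (dcount x) else dcount x)"
  by (simp add: dcount_def)
lemma wsize_ge_length: "wsize x \<ge> length x"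
  by (induction x) (auto simp: Suc_le_eq intro: order.trans[OF _ add_mono[OF lval_pos]] dest: add_mono[OF lval_pos] )
lemma wsize_zero_iff[simp]: "wsize x = 0 \<longleftrightarrow> x = []"
  using wsize_ge_length[of x] by (cases x) (auto simp: lval_pos)

lemma down_size: "z \<in> down r y \<Longrightarrow> Suc (wsize z) = wsize y"
proof -
  assume "z \<in> down r y"
  then consider (a) j where "j < length y" "y ! j \<noteq> Two" "z = take j y @ drop (Suc j) y"
    | (b) j i where "j < length y" "y ! j = Two" "z = y[j := One i]"
    unfolding down_def by blast
  then show ?thesis
  proof cases
    case a
    have "y = take j y @ y ! j # drop (Suc j) y" using a(1) by (simp add: id_take_nth_drop)
    then have "wsize y = wsize (take j y) + lval (y!j) + wsize (drop (Suc j) y)"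
      by (metis add.assoc wsize_Cons wsize_append)
    moreover have "lval (y!j) = 1" using a(2) by (cases "y!j") auto
    ultimately show ?thesis using a(3) by simp
  next
    case b
    have "y = take j y @ y ! j # drop (Suc j) y" using b(1) by (simp add: id_take_nth_drop)
    then have 1: "wsize y = wsize (take j y) + 2 + wsize (drop (Suc j) y)"
      using b(2) by (metis add.assoc lval.simps(2) wsize_Cons wsize_append)
    have "z = take j y @ One i # drop (Suc j) y" using b(1,3) by (simp add: upd_conv_take_nth_drop)
    then show ?thesis using 1 by simp
  qed
qed

lemma down_Nil[simp]: "down r [] = {}" by (simp add: down_def)

lemma finite_down: "finite (down r y)"
proof -
  have "down r y \<subseteq> (\<lambda>j. take j y @ drop (Suc j) y) ` {..<length y}
      \<union> (\<lambda>(j,i). y[j := One i]) ` ({..<length y} \<times> {1..r})"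
    unfolding down_def by force
  moreover have "finite ((\<lambda>j. take j y @ drop (Suc j) y) ` {..<length y}
      \<union> (\<lambda>(j,i). y[j := One i]) ` ({..<length y} \<times> {1..r}))" by auto
  ultimately show ?thesis by (meson finite_subset)
qed

lemma down_One: "down r (One i # x) = {x}"
proof -
  let ?y = "One i # x"
  have 1: "y \<in> {y. \<exists>j<length ?y. (\<forall>k<j. ?y ! k = Two) \<and> ?y ! j \<noteq> Two \<and>
      y = take j ?y @ drop (Suc j) ?y} \<longleftrightarrow> y = x" for y
  proof
    assume "y \<in> {y. \<exists>j<length ?y. (\<forall>k<j. ?y ! k = Two) \<and> ?y ! j \<noteq> Two \<and>
      y = take j ?y @ drop (Suc j) ?y}"
    then obtain j where "j < length ?y" "\<forall>k<j. ?y ! k = Two" "?y ! j \<noteq> Two" "y = take j ?y @ drop (Suc j) ?y"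
      by blast
    then show "y = x" by (cases j) auto
  next
    assume "y = x" then show "y \<in> {y. \<exists>j<length ?y. (\<forall>k<j. ?y ! k = Two) \<and> ?y ! j \<noteq> Two \<and>
      y = take j ?y @ drop (Suc j) ?y}" by (auto intro!: exI[of _ 0])
  qed
  have 2: "{y. \<exists>j<length ?y. \<exists>i'. (\<forall>k<j. ?y ! k = Two) \<and> ?y ! j = Two
       \<and> 1 \<le> i' \<and> i' \<le> r \<and> y = ?y[j := One i']} = {}"
  proof -
    { fix y j i' assume "j<length ?y" "\<forall>k<j. ?y ! k = Two" "?y ! j = Two"
      then have False by (cases j) auto }
    then show ?thesis by blast
  qed
  show ?thesis unfolding down_def 2 using 1 by blast
qed

lemma down_Two: "down r (Two # x) = (\<lambda>i. One i # x) ` {1..r} \<union> Cons Two ` down r x"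
proof -
  let ?y = "Two # x"
  have A: "{y. \<exists>j<length ?y. (\<forall>k<j. ?y ! k = Two) \<and> ?y ! j \<noteq> Two \<and>
      y = take j ?y @ drop (Suc j) ?y} = Cons Two ` {y. \<exists>j<length x. (\<forall>k<j. x ! k = Two) \<and> x ! j \<noteq> Two \<and>
      y = take j x @ drop (Suc j) x}"
  proof safe
    fix j assume "j < length ?y" "\<forall>k<j. ?y ! k = Two" "?y ! j \<noteq> Two"
    then obtain j' where j': "j = Suc j'" by (cases j) auto
    show "take j ?y @ drop (Suc j) ?y \<in> Cons Two ` {y. \<exists>j<length x. (\<forall>k<j. x ! k = Two) \<and> x ! j \<noteq> Two \<and>
      y = take j x @ drop (Suc j) x}"
      using \<open>j < length ?y\<close> \<open>\<forall>k<j. ?y ! k = Two\<close> \<open>?y ! j \<noteq> Two\<close> unfolding j'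
      by (auto intro!: image_eqI[of _ _ "take j' x @ drop (Suc j') x"] exI[of _ j'])
  next
    fix j assume "j < length x" "\<forall>k<j. x ! k = Two" "x ! j \<noteq> Two"
    then show "\<exists>ja<length ?y. (\<forall>k<ja. ?y ! k = Two) \<and> ?y ! ja \<noteq> Two \<and>
      Two # take j x @ drop (Suc j) x = take ja ?y @ drop (Suc ja) ?y"
      by (intro exI[of _ "Suc j"]) (auto simp: less_Suc_eq_0_disj)
  qed
  let ?L = "{y. \<exists>j<length ?y. \<exists>i. (\<forall>k<j. ?y ! k = Two) \<and> ?y ! j = Two \<and> 1 \<le> i \<and> i \<le> r
                \<and> y = ?y[j := One i]}"
  let ?R = "{y. \<exists>j<length x. \<exists>i. (\<forall>k<j. x ! k = Two) \<and> x ! j = Two \<and> 1 \<le> i \<and> i \<le> r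
                \<and> y = x[j := One i]}"
  have B1: "y \<in> (\<lambda>i. One i # x) ` {1..r} \<union> Cons Two ` ?R" if "y \<in> ?L" for y
  proof -
    obtain j i where H: "j < length ?y" "\<forall>k<j. ?y ! k = Two" "?y ! j = Two" "1 \<le> i" "i \<le> r"
      "y = ?y[j := One i]" using \<open>y \<in> ?L\<close> by blast
    show ?thesis
    proof (cases j)
      case 0 then show ?thesis using H by auto
    next
      case (Suc j')
      have "\<forall>k<j'. x!k = Two" using H(2) Suc by auto
      then have "x[j' := One i] \<in> ?R" using H Suc by auto
      then show ?thesis using H Suc by auto
    qed
  qed
  have B2: "y \<in> ?L" if "y \<in> (\<lambda>i. One i # x) ` {1..r} \<union> Cons Two ` ?R" for y
  proof -
    { fix i assume "1 \<le> i" "i \<le> r" "y = One i # x"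
      then have "0 < length ?y \<and> (\<forall>k<0. ?y!k = Two) \<and> ?y!0 = Two \<and> 1 \<le> i \<and> i \<le> r \<and> y = ?y[0 := One i]" by simp
      then have ?thesis by blast }
    moreover
    { fix j i assume "j < length x" "\<forall>k<j. x ! k = Two" "x ! j = Two" "1 \<le> i" "i \<le> r"
        "y = Two # x[j := One i]"
      then have f1: "\<forall>k<Suc j. ?y!k = Two"
        by (metis less_Suc_eq_0_disj nth_Cons_0 nth_Cons_Suc)
      have f2: "Suc j < length ?y" "?y!Suc j = Two" "y = ?y[Suc j := One i]"
        using \<open>j < length x\<close> \<open>x ! j = Two\<close> \<open>y = Two # x[j := One i]\<close> by simp_all
      have ?thesis
        apply (rule CollectI)
        apply (rule exI[where x="Suc j"])
        apply (rule conjI)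
         apply (rule f2(1))
        apply (rule exI[where x=i])
        using f1 f2 \<open>1 \<le> i\<close> \<open>i \<le> r\<close> by simp }
    moreover
    from that consider (a) i where "1 \<le> i" "i \<le> r" "y = One i # x" | (b) y' where "y' \<in> ?R" "y = Two # y'"
      by (elim UnE imageE) (simp_all only: atLeastAtMost_iff, blast+)
    then show ?thesis
    proof cases
      case a then show ?thesis using calculation(1) by blast
    next
      case b
      then obtain j i where "j < length x" "\<forall>k<j. x ! k = Two" "x ! j = Two" "1 \<le> i" "i \<le> r"
        "y' = x[j := One i]" by blast
      then show ?thesis using calculation(2) b(2) by blast
    qed
  qed
  have B: "?L = (\<lambda>i. One i # x) ` {1..r} \<union> Cons Two ` ?R" using B1 B2 by blast
  show ?thesis unfolding down_def A B by (auto simp: image_Un)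
qed

definition paths :: "nat \<Rightarrow> word \<Rightarrow> word \<Rightarrow> word list set" where
  "paths r x y = {ps :: word list. ps \<noteq> [] \<and> hd ps = y \<and> last ps = x
      \<and> (\<forall>i. Suc i < length ps \<longrightarrow> ps ! Suc i \<in> down r (ps ! i))
      \<and> (\<forall>i<length ps. wsize (ps ! i) + i = wsize y)}"

lemma dpaths_card: "dpaths r x y = card (paths r x y)"
  unfolding dpaths_def paths_def by simp

lemma paths_ne: "ps \<in> paths r w y \<Longrightarrow> ps \<noteq> [] \<and> hd ps = y"
  unfolding paths_def by blast

lemma paths_size: "ps \<in> paths r w y \<Longrightarrow> wsize w + (length ps - 1) = wsize y"
proof -
  assume "ps \<in> paths r w y"
  then have "ps \<noteq> []" "last ps = w" "\<forall>i<length ps. wsize (ps ! i) + i = wsize y"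
    unfolding paths_def by auto
  then show ?thesis by (metis diff_less last_conv_nth length_greater_0_conv zero_less_one)
qed

lemma paths_empty: "wsize w > wsize y \<or> (wsize w = wsize y \<and> w \<noteq> y) \<Longrightarrow> paths r w y = {}"
proof (rule ccontr)
  assume a: "wsize w > wsize y \<or> (wsize w = wsize y \<and> w \<noteq> y)" and "paths r w y \<noteq> {}"
  then obtain ps where ps: "ps \<in> paths r w y" by blast
  have ne: "ps \<noteq> []" using ps unfolding paths_def by auto
  from paths_size[OF ps] a have "length ps - 1 = 0" "w \<noteq> y" by auto
  with ne have "length ps = 1" "w \<noteq> y" by (cases ps; simp)+
  then obtain a where "ps = [a]" by (cases ps) auto
  then show False using ps \<open>w \<noteq> y\<close> unfolding paths_def by auto
qed

lemma paths_decomp: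
  "paths r w y = (if w = y then {[y]} else {}) \<union> (\<Union>z\<in>down r y. Cons y ` paths r w z)"
proof (intro equalityI subsetI)
  fix ps assume ps: "ps \<in> paths r w y"
  then have ne: "ps \<noteq> []" and hd: "hd ps = y" and la: "last ps = w"
    and st: "\<forall>i. Suc i < length ps \<longrightarrow> ps ! Suc i \<in> down r (ps ! i)"
    and sz: "\<forall>i<length ps. wsize (ps ! i) + i = wsize y"
    unfolding paths_def by blast+
  obtain a rest where psd: "ps = a # rest" using ne by (cases ps) auto
  have a: "a = y" using hd psd by simp
  show "ps \<in> (if w = y then {[y]} else {}) \<union> (\<Union>z\<in>down r y. Cons y ` paths r w z)"
  proof (cases rest)
    case Nil
    then show ?thesis using psd a la by auto
  next
    case (Cons b rest')
    have "Suc 0 < length ps" using psd Cons by simp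
    then have "ps ! Suc 0 \<in> down r (ps ! 0)" using st by blast
    then have zd: "b \<in> down r y" using psd Cons a by simp
    have zs: "Suc (wsize b) = wsize y" using down_size[OF zd] .
    have "rest \<in> paths r w b"
      unfolding paths_def
    proof (intro CollectI conjI allI impI)
      show "rest \<noteq> []" "hd rest = b" using Cons by auto
      show "last rest = w" using la psd Cons by auto
    next
      fix i assume "Suc i < length rest"
      then have "Suc (Suc i) < length ps" using psd by simp
      then have "ps ! Suc (Suc i) \<in> down r (ps ! Suc i)" using st by blast
      then show "rest ! Suc i \<in> down r (rest ! i)" using psd by simp
    next
      fix i assume "i < length rest"
      then have "Suc i < length ps" using psd by simp
      then have "wsize (ps ! Suc i) + Suc i = wsize y" using sz by blast
      then show "wsize (rest ! i) + i = wsize b" using psd zs by simp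
    qed
    then show ?thesis using zd psd a by blast
  qed
next
  fix ps assume "ps \<in> (if w = y then {[y]} else {}) \<union> (\<Union>z\<in>down r y. Cons y ` paths r w z)"
  then consider "w = y" "ps = [y]" | z ps' where "z \<in> down r y" "ps' \<in> paths r w z" "ps = y # ps'"
    by (auto split: if_splits)
  then show "ps \<in> paths r w y"
  proof cases
    case 1 then show ?thesis unfolding paths_def by auto
  next
    case 2
    have zs: "Suc (wsize z) = wsize y" using down_size[OF 2(1)] .
    from 2(2) have ne: "ps' \<noteq> []" and hd: "hd ps' = z" and la: "last ps' = w"
      and st: "\<forall>i. Suc i < length ps' \<longrightarrow> ps' ! Suc i \<in> down r (ps' ! i)"
      and sz: "\<forall>i<length ps'. wsize (ps' ! i) + i = wsize z"
      unfolding paths_def by blast+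
    show ?thesis unfolding paths_def 2(3)
    proof (intro CollectI conjI allI impI)
      show "y # ps' \<noteq> []" "hd (y # ps') = y" by auto
      show "last (y # ps') = w" using ne la by auto
    next
      fix i assume i: "Suc i < length (y # ps')"
      show "(y # ps') ! Suc i \<in> down r ((y # ps') ! i)"
      proof (cases i)
        case 0 then show ?thesis using hd ne 2(1) by (simp add: hd_conv_nth)
      next
        case (Suc i')
        then have "Suc i' < length ps'" using i by simp
        then have "ps' ! Suc i' \<in> down r (ps' ! i')" using st by blast
        then show ?thesis using Suc by simp
      qed
    next
      fix i assume i: "i < length (y # ps')"
      show "wsize ((y # ps') ! i) + i = wsize y"
      proof (cases i)
        case 0 then show ?thesis by simp
      next
        case (Suc i')
        then have "i' < length ps'" using i by simp
        then have "wsize (ps' ! i') + i' = wsize z" using sz by blast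
        then show ?thesis using Suc zs by simp
      qed
    qed
  qed
qed

lemma finite_paths: "finite (paths r w y)"
proof (induct y rule: measure_induct_rule[of wsize])
  case (less y)
  have "finite (\<Union>z\<in>down r y. Cons y ` paths r w z)"
    using less down_size[of _ r y] finite_down[of r y] by (force)
  then show ?case by (subst paths_decomp) auto
qed

lemma dpaths_rec: "dpaths r w y = (if w = y then 1 else 0) + (\<Sum>z\<in>down r y. dpaths r w z)"
proof -
  have disj: "(if w = y then {[y]} else {}) \<inter> (\<Union>z\<in>down r y. Cons y ` paths r w z) = {}"
  proof -
    have "[y] \<notin> Cons y ` paths r w z" for z using paths_ne[of "[]" r w z] by auto
    then show ?thesis by auto
  qed
  have c1: "card (\<Union>z\<in>down r y. Cons y ` paths r w z) = (\<Sum>z\<in>down r y. card (Cons y ` paths r w z))"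
  proof (rule card_UN_disjoint)
    show "finite (down r y)" by (rule finite_down)
    show "\<forall>i\<in>down r y. finite (Cons y ` paths r w i)" using finite_paths by auto
    show "\<forall>i\<in>down r y. \<forall>j\<in>down r y. i \<noteq> j \<longrightarrow> Cons y ` paths r w i \<inter> Cons y ` paths r w j = {}"
    proof (intro ballI impI)
      fix i j :: word assume "i \<noteq> j"
      { fix ps assume "ps \<in> Cons y ` paths r w i" "ps \<in> Cons y ` paths r w j"
        then obtain p1 p2 where "p1 \<in> paths r w i" "p2 \<in> paths r w j" "ps = y # p1" "ps = y # p2" by blast
        then have False using paths_ne[of p1 r w i] paths_ne[of p2 r w j] \<open>i \<noteq> j\<close> by auto }
      then show "Cons y ` paths r w i \<inter> Cons y ` paths r w j = {}" by blast
    qed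
  qed
  have c2: "card (Cons y ` paths r w z) = card (paths r w z)" for z
    by (rule card_image) auto
  have "dpaths r w y = card ((if w = y then {[y]} else {}) \<union> (\<Union>z\<in>down r y. Cons y ` paths r w z))"
    unfolding dpaths_card by (subst paths_decomp) simp
  also have "\<dots> = card (if w = y then {[y]} else {}) + card (\<Union>z\<in>down r y. Cons y ` paths r w z)"
    by (rule card_Un_disjoint) (use disj finite_paths finite_down in auto)
  finally show ?thesis using c1 c2 dpaths_card by simp
qed

lemma dpaths_zero: "wsize w > wsize y \<or> (wsize w = wsize y \<and> w \<noteq> y) \<Longrightarrow> dpaths r w y = 0"
  using paths_empty dpaths_card by simp

lemma dpaths_gt_zero: "wsize w > wsize y \<Longrightarrow> dpaths r w y = 0"
  using dpaths_zero by blast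

lemma dpaths_self[simp]: "dpaths r y y = 1"
proof -
  have "(\<Sum>z\<in>down r y. dpaths r y z) = 0"
    by (rule sum.neutral) (auto intro!: dpaths_zero dest: down_size)
  then show ?thesis by (subst dpaths_rec) simp
qed

lemma dpaths_sum_down: "(\<Sum>z\<in>down r x. dpaths r w z) = dpaths r w x - (if w = x then 1 else 0)"
  using dpaths_rec[of r w x] by simp

lemma dpaths_Nil: "dpaths r w [] = (if w = [] then 1 else 0)"
  by (subst dpaths_rec) simp

lemma dpaths_One: "dpaths r w (One i # x) = (if w = One i # x then 1 else 0) + dpaths r w x"
  by (subst dpaths_rec) (simp add: down_One)

definition ecnd :: "nat \<Rightarrow> word \<Rightarrow> bool" where
  "ecnd r w = (case w of [] \<Rightarrow> False | l # _ \<Rightarrow> letter_ok r l)"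

lemma ecnd_simps[simp]: "ecnd r [] = False" "ecnd r (l # w) = letter_ok r l"
  by (simp_all add: ecnd_def)

lemma letter_ok_Two[simp]: "letter_ok r Two" by (simp add: letter_ok_def)
lemma letter_ok_One[simp]: "letter_ok r (One i) \<longleftrightarrow> 1 \<le> i \<and> i \<le> r" by (simp add: letter_ok_def)

lemma sum_down_Two:
  "(\<Sum>z\<in>down r (Two # x). f z) = (\<Sum>i\<in>{1..r}. f (One i # x)) + (\<Sum>z\<in>down r x. f (Two # z))"
proof -
  have "(\<Sum>z\<in>down r (Two # x). f z) = (\<Sum>z\<in>(\<lambda>i. One i # x) ` {1..r}. f z) + (\<Sum>z\<in>Cons Two ` down r x. f z)"
    unfolding down_Two by (rule sum.union_disjoint) (auto intro: finite_down)
  also have "(\<Sum>z\<in>(\<lambda>i. One i # x) ` {1..r}. f z) = (\<Sum>i\<in>{1..r}. f (One i # x))"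
    by (rule sum.reindex_cong[where l="\<lambda>i. One i # x"]) (auto simp: inj_on_def)
  also have "(\<Sum>z\<in>Cons Two ` down r x. f z) = (\<Sum>z\<in>down r x. f (Two # z))"
    by (rule sum.reindex_cong[where l="Cons Two"]) (auto simp: inj_on_def)
  finally show ?thesis .
qed

lemma dpaths_Two:
  "dpaths r w (Two # x) = r * (wsize x + 1 - wsize w) * dpaths r w x
     + (if ecnd r w then dpaths r (tl w) x else 0)"
proof (induct x arbitrary: w rule: measure_induct_rule[of wsize])
  case (less x)
  show ?case
  proof (cases "w = Two # x")
    case True
    then show ?thesis by simp
  next
    case wne: False
    have SA: "(\<Sum>i\<in>{1..r}. dpaths r w (One i # x)) = r * dpaths r w x
        + (if (\<exists>i. 1 \<le> i \<and> i \<le> r \<and> w = One i # x) then 1 else 0)"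
    proof -
      have "(\<Sum>i\<in>{1..r}. dpaths r w (One i # x)) = (\<Sum>i\<in>{1..r}. (if w = One i # x then 1 else 0) + dpaths r w x)"
        by (simp add: dpaths_One)
      also have "\<dots> = (\<Sum>i\<in>{1..r}. (if w = One i # x then 1 else 0)) + r * dpaths r w x"
        by (simp add: sum.distrib)
      also have "(\<Sum>i\<in>{1..r}. (if w = One i # x then 1 else (0::nat))) = (if (\<exists>i. 1 \<le> i \<and> i \<le> r \<and> w = One i # x) then 1 else 0)"
      proof (cases "\<exists>i. 1 \<le> i \<and> i \<le> r \<and> w = One i # x")
        case True
        then obtain i where i: "1 \<le> i" "i \<le> r" "w = One i # x" by blast
        have "(\<Sum>i'\<in>{1..r}. (if w = One i' # x then 1 else (0::nat))) = (\<Sum>i'\<in>{1..r}. (if i' = i then 1 else 0))"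
          using i by (intro sum.cong) auto
        also have "\<dots> = 1" using i by simp
        finally show ?thesis using True by simp
      next
        case False
        then show ?thesis by (auto intro!: sum.neutral)
      qed
      finally show ?thesis by simp
    qed
    have SB: "(\<Sum>z\<in>down r x. dpaths r w (Two # z)) = r * (wsize x - wsize w) * (dpaths r w x - (if w = x then 1 else 0))
        + (if ecnd r w then dpaths r (tl w) x - (if tl w = x then 1 else 0) else 0)"
    proof -
      have "(\<Sum>z\<in>down r x. dpaths r w (Two # z)) = (\<Sum>z\<in>down r x. r * (wsize x - wsize w) * dpaths r w z
           + (if ecnd r w then dpaths r (tl w) z else 0))"
      proof (rule sum.cong)
        fix z assume z: "z \<in> down r x"
        have zs: "Suc (wsize z) = wsize x" by (rule down_size[OF z])
        then have "wsize z < wsize x" by simp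
        then have "dpaths r w (Two # z) = r * (wsize z + 1 - wsize w) * dpaths r w z
           + (if ecnd r w then dpaths r (tl w) z else 0)" using less by blast
        then show "dpaths r w (Two # z) = r * (wsize x - wsize w) * dpaths r w z
           + (if ecnd r w then dpaths r (tl w) z else 0)" using zs by simp
      qed simp
      also have "\<dots> = r * (wsize x - wsize w) * (\<Sum>z\<in>down r x. dpaths r w z)
           + (if ecnd r w then (\<Sum>z\<in>down r x. dpaths r (tl w) z) else 0)"
        by (simp add: sum.distrib sum_distrib_left)
      finally show ?thesis by (simp add: dpaths_sum_down)
    qed
    have main: "dpaths r w (Two # x) = r * dpaths r w x
        + (if (\<exists>i. 1 \<le> i \<and> i \<le> r \<and> w = One i # x) then 1 else 0)
        + r * (wsize x - wsize w) * (dpaths r w x - (if w = x then 1 else 0))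
        + (if ecnd r w then dpaths r (tl w) x - (if tl w = x then 1 else 0) else 0)"
    proof -
      have "dpaths r w (Two # x) = (\<Sum>z\<in>down r (Two # x). dpaths r w z)"
        using dpaths_rec[of r w "Two # x"] wne by simp
      also have "\<dots> = (\<Sum>i\<in>{1..r}. dpaths r w (One i # x)) + (\<Sum>z\<in>down r x. dpaths r w (Two # z))"
        by (rule sum_down_Two)
      finally show ?thesis unfolding SA SB by simp
    qed
    show ?thesis
    proof (cases "w = x")
      case True
      have nex: "\<not> (\<exists>i. 1 \<le> i \<and> i \<le> r \<and> w = One i # x)" using True by auto
      have "ecnd r w \<Longrightarrow> tl w \<noteq> x" using True by (cases x) auto
      then show ?thesis using main True nex by auto
    next
      case wnx: False
      have e1: "r * dpaths r w x + r * (wsize x - wsize w) * dpaths r w x = r * (wsize x + 1 - wsize w) * dpaths r w x"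
      proof (cases "wsize w \<le> wsize x")
        case True
        then have "wsize x + 1 - wsize w = 1 + (wsize x - wsize w)" by simp
        then show ?thesis by (simp add: algebra_simps)
      next
        case False
        then show ?thesis using dpaths_gt_zero[of x w r] by simp
      qed
      have e2: "(if (\<exists>i. 1 \<le> i \<and> i \<le> r \<and> w = One i # x) then 1 else 0)
        + (if ecnd r w then dpaths r (tl w) x - (if tl w = x then 1 else 0) else 0)
        = (if ecnd r w then dpaths r (tl w) x else 0)"
      proof (cases "tl w = x")
        case True
        then obtain l where l: "w = l # x" using wnx by (cases w) auto
        show ?thesis
        proof (cases l)
          case (One i)
          then show ?thesis using l by auto
        next
          case Two
          then show ?thesis using l wne by simp
        qed
      next
        case False
        then show ?thesis by auto
      qed
      show ?thesis using main wnx e1 e2 by simp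
    qed
  qed
qed

lemma dpaths_Nil_Two: "dpaths r [] (Two # x) = r * (wsize x + 1) * dpaths r [] x"
  by (simp add: dpaths_Two)

lemma dpaths_Nil_One: "dpaths r [] (One i # x) = dpaths r [] x"
  by (simp add: dpaths_One)

lemma dpaths_Nil_pos: "r \<ge> 1 \<Longrightarrow> dpaths r [] x > 0"
proof (induction x)
  case Nil then show ?case by (simp)
next
  case (Cons l x)
  then show ?case by (cases l) (auto simp: dpaths_Nil_Two dpaths_Nil_One)
qed

lemma s_word_Nil[simp]: "s_word [] = []" by (simp add: s_word_def)
lemma s_word_Cons[simp]: "s_word (l # x) = sl l # s_word x" by (simp add: s_word_def)
lemma lval_sl[simp]: "lval (sl l) = lval l" by (cases l) auto
lemma sl_Two[simp]: "sl l = Two \<longleftrightarrow> l = Two" by (cases l) auto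
lemma wsize_s[simp]: "wsize (s_word x) = wsize x" by (induction x) auto
lemma dcount_s[simp]: "dcount (s_word x) = dcount x" by (induction x) auto
lemma wf_word_Nil[simp]: "wf_word r []" by (simp add: wf_word_def)
lemma wf_word_Cons[simp]: "wf_word r (l # x) \<longleftrightarrow> letter_ok r l \<and> wf_word r x" by (simp add: wf_word_def)
lemma wf_s_word: "wf_word 1 (s_word x)" by (induction x) (auto, case_tac a, auto)

lemma s_word_Nil_iff[simp]: "s_word w = [] \<longleftrightarrow> w = []" by (cases w) auto

lemma S_Nil: "S_set r [] = {[]}" by (auto simp: S_set_def s_word_def)

lemma S_One1: "S_set r (One 1 # u) = (\<Union>i\<in>{1..r}. Cons (One i) ` S_set r u)"
proof (intro equalityI subsetI)
  fix w assume "w \<in> S_set r (One 1 # u)"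
  then have w: "wf_word r w" "s_word w = One 1 # u" by (auto simp: S_set_def)
  then obtain l w' where "w = l # w'" by (cases w) auto
  with w show "w \<in> (\<Union>i\<in>{1..r}. Cons (One i) ` S_set r u)"
    by (cases l) (auto simp: S_set_def)
qed (auto simp: S_set_def)

lemma S_OneI: "i \<noteq> 1 \<Longrightarrow> S_set r (One i # u) = {}"
proof -
  assume "i \<noteq> 1"
  { fix w assume "w \<in> S_set r (One i # u)"
    then have w: "s_word w = One i # u" by (auto simp: S_set_def)
    then obtain l w' where "w = l # w'" by (cases w) auto
    with w \<open>i \<noteq> 1\<close> have False by (cases l) auto }
  then show ?thesis by blast
qed

lemma S_Two: "S_set r (Two # u) = Cons Two ` S_set r u"
proof (intro equalityI subsetI)
  fix w assume "w \<in> S_set r (Two # u)"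
  then have w: "wf_word r w" "s_word w = Two # u" by (auto simp: S_set_def)
  then obtain l w' where "w = l # w'" by (cases w) auto
  with w show "w \<in> Cons Two ` S_set r u"
    by (cases l) (auto simp: S_set_def)
qed (auto simp: S_set_def)

lemma finite_S: "finite (S_set r u)"
proof (induction u)
  case Nil then show ?case by (simp add: S_Nil)
next
  case (Cons l u)
  show ?case
  proof (cases l)
    case (One i)
    show ?thesis
    proof (cases "i = 1")
      case True
      have "finite (\<Union>i\<in>{1..r}. Cons (One i) ` S_set r u)" using Cons by auto
      then show ?thesis using True One S_One1[of r u] by simp
    next
      case False then show ?thesis using One S_OneI by simp
    qed
  next
    case Two then show ?thesis using Cons by (simp add: S_Two)
  qed
qed

lemma S_props: "w \<in> S_set r u \<Longrightarrow> wsize w = wsize u \<and> dcount w = dcount u \<and> wf_word r w \<and> (w = [] \<longleftrightarrow> u = [])"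
  by (auto simp: S_set_def)

lemma I2:
  assumes "wf_word r y" "wf_word 1 u"
  shows "r ^ dcount u * (\<Sum>w\<in>S_set r u. dpaths r w y) = r ^ dcount y * dpaths 1 u (s_word y)"
  using assms
proof (induction y arbitrary: u)
  case Nil
  have "(\<Sum>w\<in>S_set r u. dpaths r w []) = (if u = [] then 1 else 0)"
  proof (cases "u = []")
    case True then show ?thesis by (simp add: S_Nil dpaths_Nil)
  next
    case False
    then show ?thesis by (auto simp: dpaths_Nil intro!: sum.neutral dest: S_props)
  qed
  then show ?case by (simp add: dpaths_Nil)
next
  case (Cons l x)
  have wx: "wf_word r x" and wl: "letter_ok r l" using Cons.prems by auto
  show ?case
  proof (cases l)
    case (One i)
    have "(\<Sum>w\<in>S_set r u. dpaths r w (One i # x)) = (\<Sum>w\<in>S_set r u. (if w = One i # x then 1 else 0)) + (\<Sum>w\<in>S_set r u. dpaths r w x)"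
      by (simp add: dpaths_One sum.distrib)
    also have "(\<Sum>w\<in>S_set r u. (if w = One i # x then 1 else (0::nat))) = (if u = One 1 # s_word x then 1 else 0)"
    proof -
      have "One i # x \<in> S_set r u \<longleftrightarrow> u = One 1 # s_word x"
        using Cons.prems One by (auto simp: S_set_def)
      then show ?thesis using finite_S[of r u] by (simp add: sum.delta)
    qed
    finally have e: "(\<Sum>w\<in>S_set r u. dpaths r w (One i # x)) = (if u = One 1 # s_word x then 1 else 0) + (\<Sum>w\<in>S_set r u. dpaths r w x)" .
    have "r ^ dcount u * (if u = One 1 # s_word x then 1 else 0) = r ^ dcount x * (if u = One 1 # s_word x then 1 else 0)"
      by auto
    then show ?thesis using Cons.IH[OF wx Cons.prems(2)] One e
      by (simp add: dpaths_One algebra_simps)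
  next
    case Two
    have ec: "ecnd r w \<longleftrightarrow> u \<noteq> []" if "w \<in> S_set r u" for w
      using S_props[OF that] by (cases w) auto
    have "(\<Sum>w\<in>S_set r u. dpaths r w (Two # x)) = (\<Sum>w\<in>S_set r u. r * (wsize x + 1 - wsize u) * dpaths r w x
         + (if u \<noteq> [] then dpaths r (tl w) x else 0))"
      by (rule sum.cong) (auto simp: dpaths_Two ec dest: S_props)
    also have "\<dots> = r * (wsize x + 1 - wsize u) * (\<Sum>w\<in>S_set r u. dpaths r w x)
         + (\<Sum>w\<in>S_set r u. (if u \<noteq> [] then dpaths r (tl w) x else 0))"
      by (simp add: sum.distrib sum_distrib_left)
    finally have e: "(\<Sum>w\<in>S_set r u. dpaths r w (Two # x)) = r * (wsize x + 1 - wsize u) * (\<Sum>w\<in>S_set r u. dpaths r w x)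
         + (\<Sum>w\<in>S_set r u. (if u \<noteq> [] then dpaths r (tl w) x else 0))" .
    have e1: "dpaths 1 u (s_word (Two # x)) = (wsize x + 1 - wsize u) * dpaths 1 u (s_word x)
        + (if u \<noteq> [] then dpaths 1 (tl u) (s_word x) else 0)"
    proof -
      have "ecnd 1 u \<longleftrightarrow> u \<noteq> []" using Cons.prems(2) by (cases u) auto
      then show ?thesis by (simp add: dpaths_Two)
    qed
    have second: "r ^ dcount u * (\<Sum>w\<in>S_set r u. (if u \<noteq> [] then dpaths r (tl w) x else 0))
       = r ^ dcount (Two # x) * (if u \<noteq> [] then dpaths 1 (tl u) (s_word x) else 0)"
    proof (cases u)
      case Nil then show ?thesis by simp
    next
      case (Cons a u')
      have wu': "wf_word 1 u'" using Cons \<open>wf_word 1 u\<close> by simp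
      show ?thesis
      proof (cases a)
        case (One i)
        then have i: "i = 1" using Cons \<open>wf_word 1 u\<close> by auto
        have "(\<Sum>w\<in>S_set r u. dpaths r (tl w) x) = (\<Sum>i\<in>{1..r}. \<Sum>w\<in>Cons (One i) ` S_set r u'. dpaths r (tl w) x)"
          unfolding Cons One i S_One1
          by (rule sum.UNION_disjoint) (auto simp: finite_S)
        also have "\<dots> = (\<Sum>i\<in>{1..r}. \<Sum>w\<in>S_set r u'. dpaths r w x)"
          by (rule sum.cong, simp, subst sum.reindex) (auto simp: inj_on_def)
        also have "\<dots> = r * (\<Sum>w\<in>S_set r u'. dpaths r w x)" by simp
        finally have "(\<Sum>w\<in>S_set r u. dpaths r (tl w) x) = r * (\<Sum>w\<in>S_set r u'. dpaths r w x)" .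
        then show ?thesis using Cons One i Two \<open>wf_word 1 u\<close>
          Cons.IH[OF wx wu'] by (simp add: algebra_simps)
      next
        case Two
        have "(\<Sum>w\<in>S_set r u. dpaths r (tl w) x) = (\<Sum>w\<in>S_set r u'. dpaths r w x)"
          unfolding Cons Two S_Two by (subst sum.reindex) (auto simp: inj_on_def)
        then show ?thesis using Cons Two Cons.IH[OF wx wu'] by (simp add: algebra_simps)
      qed
    qed
    show ?thesis
      using e e1 second Cons.IH[OF wx Cons.prems(2)] Two
      by (simp add: algebra_simps)
  qed
qed

lemma I1: "wf_word r y \<Longrightarrow> dpaths r [] y = r ^ dcount y * dpaths 1 [] (s_word y)"
  using I2[of r y "[]"] by (simp add: S_Nil)

definition ratio :: "nat \<Rightarrow> word \<Rightarrow> word \<Rightarrow> real" where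
  "ratio r w y = real (dpaths r [] w) * real (dpaths r w y) / real (dpaths r [] y)"

lemma FI:
  assumes "r \<ge> 1" "wf_word r y" "wf_word 1 u"
  shows "ratio 1 u (s_word y) = (\<Sum>w\<in>S_set r u. ratio r w y)"
proof -
  have I: "real (r ^ dcount u) * (\<Sum>w\<in>S_set r u. real (dpaths r w y)) = real (r ^ dcount y) * real (dpaths 1 u (s_word y))"
    using I2[OF assms(2,3)] by (metis of_nat_mult of_nat_sum)
  have w: "real (dpaths r [] w) = real (r ^ dcount u) * real (dpaths 1 [] u)" if "w \<in> S_set r u" for w
    using I1[of r w] S_props[OF that] that by (auto simp: S_set_def)
  have y: "real (dpaths r [] y) = real (r ^ dcount y) * real (dpaths 1 [] (s_word y))"
    using I1[OF assms(2)] by simp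
  have pos: "real r ^ dcount y > 0" "real (dpaths 1 [] (s_word y)) > 0"
    using assms(1) dpaths_Nil_pos[of 1] by auto
  have "(\<Sum>w\<in>S_set r u. ratio r w y) = (\<Sum>w\<in>S_set r u. real (r ^ dcount u) * real (dpaths 1 [] u) * real (dpaths r w y)
      / (real (r ^ dcount y) * real (dpaths 1 [] (s_word y))))"
    unfolding ratio_def by (rule sum.cong) (auto simp: w y)
  also have "\<dots> = real (dpaths 1 [] u) / (real (r ^ dcount y) * real (dpaths 1 [] (s_word y)))
       * (real (r ^ dcount u) * (\<Sum>w\<in>S_set r u. real (dpaths r w y)))"
    by (simp add: sum_distrib_left sum_divide_distrib algebra_simps)
  also have "\<dots> = ratio 1 u (s_word y)"
    unfolding I ratio_def using pos assms(1) by (simp add: field_simps)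
  finally show ?thesis by simp
qed

lemma count_unique:
  fixes p1 p2 :: nat
  assumes "f p1" "f p2" "card {k. k < p1 \<and> f k} = card {k. k < p2 \<and> f k}"
  shows "p1 = p2"
proof (rule ccontr)
  assume ne: "p1 \<noteq> p2"
  { fix a b assume fa: "f a" and ab: "a < b" and c: "card {k. k < a \<and> f k} = card {k. k < b \<and> f k}"
    have "insert a {k. k < a \<and> f k} \<subseteq> {k. k < b \<and> f k}" using fa ab by auto
    then have "card (insert a {k. k < a \<and> f k}) \<le> card {k. k < b \<and> f k}"
      by (rule card_mono[rotated]) auto
    then have False using c by simp }
  then show False using assms ne by (metis linorder_neqE_nat)
qed

lemma TPR: "1 \<le> j \<Longrightarrow> j \<le> length (filter (\<lambda>l. l = Two) R) \<Longrightarrow>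
   \<exists>p<length R. R ! p = Two \<and> card {k. k < p \<and> R ! k = Two} = j - 1"
proof (induction R arbitrary: j rule: rev_induct)
  case Nil then show ?case by simp
next
  case (snoc l R)
  show ?case
  proof (cases "j \<le> length (filter (\<lambda>l. l = Two) R)")
    case True
    then obtain p where p: "p < length R" "R ! p = Two" "card {k. k < p \<and> R ! k = Two} = j - 1"
      using snoc by blast
    have "{k. k < p \<and> (R @ [l]) ! k = Two} = {k. k < p \<and> R ! k = Two}"
      using p(1) by (auto simp: nth_append)
    then show ?thesis using p by (intro exI[of _ p]) (auto simp: nth_append)
  next
    case False
    then have l: "l = Two" and j: "j = Suc (length (filter (\<lambda>l. l = Two) R))"
      using snoc.prems by (auto split: if_splits)
    have "{k. k < length R \<and> (R @ [l]) ! k = Two} = {k. k < length R \<and> R ! k = Two}"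
      by (auto simp: nth_append)
    moreover have "card {k. k < length R \<and> R ! k = Two} = length (filter (\<lambda>l. l = Two) R)"
      by (simp add: length_filter_conv_card)
    ultimately show ?thesis using l j by (intro exI[of _ "length R"]) (auto simp: nth_append)
  qed
qed

lemma dcount_rev: "dcount x = length (filter (\<lambda>l. l = Two) (rev x))"
  by (simp add: dcount_def rev_filter[symmetric])

lemma twopos_fin_eq:
  assumes "p < length x" "rev x ! p = Two" "card {k. k < p \<and> rev x ! k = Two} = j - 1"
  shows "twopos_fin x j = p"
  unfolding twopos_fin_def
proof (rule the_equality)
  show "p < length x \<and> rev x ! p = Two \<and> card {k. k < p \<and> rev x ! k = Two} = j - 1" using assms by simp
next
  fix q assume "q < length x \<and> rev x ! q = Two \<and> card {k. k < q \<and> rev x ! k = Two} = j - 1"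
  then show "q = p" using assms count_unique[of "\<lambda>k. rev x ! k = Two" q p] by auto
qed

lemma sum_lval_rev: "(\<Sum>k<length x. lval (rev x ! k)) = wsize x"
proof -
  have "(\<Sum>k<length x. lval (rev x ! k)) = sum_list (map lval (rev x))"
    by (simp add: sum_list_sum_nth atLeast0LessThan)
  then show ?thesis by (simp add: wsize_def sum_list_rev rev_map[symmetric])
qed

lemma g_fin_Cons_old:
  assumes "1 \<le> j" "j \<le> dcount x"
  shows "g_fin (l # x) j = g_fin x j"
proof -
  obtain p where p: "p < length x" "rev x ! p = Two" "card {k. k < p \<and> rev x ! k = Two} = j - 1"
    using TPR[of j "rev x"] assms by (auto simp: dcount_rev)
  have t1: "twopos_fin x j = p" using twopos_fin_eq[OF p] .
  have "{k. k < p \<and> rev (l # x) ! k = Two} = {k. k < p \<and> rev x ! k = Two}"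
    using p(1) by (auto simp: nth_append)
  then have t2: "twopos_fin (l # x) j = p"
    using p by (intro twopos_fin_eq) (auto simp: nth_append)
  have "(\<Sum>k\<le>p. lval (rev (l # x) ! k)) = (\<Sum>k\<le>p. lval (rev x ! k))"
    using p(1) by (intro sum.cong) (auto simp: nth_append)
  then show ?thesis unfolding g_fin_def t1 t2 by simp
qed

lemma g_fin_Cons_new:
  "g_fin (Two # x) (Suc (dcount x)) = wsize x + 1"
proof -
  have c: "card {k. k < length x \<and> rev (Two # x) ! k = Two} = dcount x"
  proof -
    have "{k. k < length x \<and> rev (Two # x) ! k = Two} = {k. k < length (rev x) \<and> rev x ! k = Two}"
      by (auto simp: nth_append)
    then show ?thesis by (simp add: length_filter_conv_card dcount_rev)
  qed
  have t: "twopos_fin (Two # x) (Suc (dcount x)) = length x"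
    by (rule twopos_fin_eq) (use c in \<open>auto simp: nth_append\<close>)
  have "(\<Sum>k\<le>length x. lval (rev (Two # x) ! k)) = (\<Sum>k<length x. lval (rev (Two # x) ! k)) + 2"
    by (simp add: lessThan_Suc_atMost[symmetric] nth_append)
  also have "(\<Sum>k<length x. lval (rev (Two # x) ! k)) = (\<Sum>k<length x. lval (rev x ! k))"
    by (intro sum.cong) (auto simp: nth_append)
  finally show ?thesis unfolding g_fin_def t by (simp add: sum_lval_rev)
qed

lemma pi_fin_Nil[simp]: "pi_fin [] = 1"
proof -
  have e: "{j. 1 \<le> j \<and> j \<le> dcount [] \<and> g_fin [] j > 1} = {}" by auto
  show ?thesis unfolding pi_fin_def e by simp
qed

lemma pi_fin_One: "pi_fin (One i # x) = pi_fin x"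
proof -
  have "{j. 1 \<le> j \<and> j \<le> dcount (One i # x) \<and> g_fin (One i # x) j > 1} = {j. 1 \<le> j \<and> j \<le> dcount x \<and> g_fin x j > 1}"
    using g_fin_Cons_old by auto
  then show ?thesis unfolding pi_fin_def
    by (intro prod.cong) (auto simp: g_fin_Cons_old)
qed

lemma pi_fin_Two: "pi_fin (Two # x) = (if wsize x \<ge> 1 then real (wsize x) / real (wsize x + 1) else 1) * pi_fin x"
proof -
  let ?J = "{j. 1 \<le> j \<and> j \<le> dcount x \<and> g_fin x j > 1}"
  let ?f = "\<lambda>y j. (real (g_fin y j) - 1) / real (g_fin y j)"
  have J: "{j. 1 \<le> j \<and> j \<le> dcount (Two # x) \<and> g_fin (Two # x) j > 1}
      = ?J \<union> (if wsize x \<ge> 1 then {Suc (dcount x)} else {})"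
    using g_fin_Cons_old[of _ x Two] g_fin_Cons_new[of x] by (auto simp: le_Suc_eq)
  have "pi_fin (Two # x) = (\<Prod>j\<in>?J \<union> (if wsize x \<ge> 1 then {Suc (dcount x)} else {}). ?f (Two # x) j)"
    unfolding pi_fin_def J ..
  also have "\<dots> = (\<Prod>j\<in>?J. ?f (Two # x) j) * (\<Prod>j\<in>(if wsize x \<ge> 1 then {Suc (dcount x)} else {}). ?f (Two # x) j)"
    by (rule prod.union_disjoint) auto
  also have "(\<Prod>j\<in>?J. ?f (Two # x) j) = pi_fin x"
    unfolding pi_fin_def by (intro prod.cong) (auto simp: g_fin_Cons_old)
  also have "(\<Prod>j\<in>(if wsize x \<ge> 1 then {Suc (dcount x)} else {}). ?f (Two # x) j)
      = (if wsize x \<ge> 1 then real (wsize x) / real (wsize x + 1) else 1)"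
    by (simp add: g_fin_Cons_new)
  finally show ?thesis by simp
qed

lemma pi_fin_pos: "pi_fin x > 0"
  by (induction x) (auto simp: pi_fin_Two pi_fin_One, case_tac a, auto simp: pi_fin_Two pi_fin_One)

lemma pi_fin_le1: "pi_fin x \<le> 1"
proof (induction x)
  case Nil then show ?case by simp
next
  case (Cons l x)
  show ?case
  proof (cases l)
    case (One i) then show ?thesis using Cons by (simp add: pi_fin_One)
  next
    case Two
    have "(if wsize x \<ge> 1 then real (wsize x) / real (wsize x + 1) else 1) \<le> 1" by auto
    moreover have "(if wsize x \<ge> 1 then real (wsize x) / real (wsize x + 1) else 1) \<ge> 0" by auto
    ultimately show ?thesis using Cons Two pi_fin_pos[of x] by (simp add: pi_fin_Two mult_le_one)
  qed
qed

lemma pi_fin_s: "pi_fin (s_word x) = pi_fin x"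
proof (induction x)
  case Nil then show ?case by simp
next
  case (Cons l x)
  then show ?case by (cases l) (auto simp: pi_fin_One pi_fin_Two)
qed

definition tk :: "iword \<Rightarrow> nat \<Rightarrow> word" where
  "tk v k = rev (map v [0..<k])"

lemma tk_length[simp]: "length (tk v k) = k" by (simp add: tk_def)
lemma tk_nth: "p < k \<Longrightarrow> rev (tk v k) ! p = v p" by (simp add: tk_def)
lemma tk_Suc: "tk v (Suc k) = v k # tk v k" by (simp add: tk_def)
lemma tk_0[simp]: "tk v 0 = []" by (simp add: tk_def)
lemma tk_wsize: "wsize (tk v k) \<ge> k" using wsize_ge_length[of "tk v k"] by simp
lemma tk_wf: "wf_iword r v \<Longrightarrow> wf_word r (tk v k)"
  by (induction k) (auto simp: tk_Suc wf_iword_def)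

lemma sl_Two_iff: "sl l = Two \<longleftrightarrow> l = Two" by simp

lemma pi_inf_s: "pi_inf (s_iword v) = pi_inf v"
proof -
  have a: "(s_iword v p = Two) = (v p = Two)" for p by (simp add: s_iword_def)
  have b: "lval (s_iword v p) = lval (v p)" for p by (simp add: s_iword_def)
  have "has_two_inf (s_iword v) = has_two_inf v" unfolding has_two_inf_def a by simp
  moreover have "twopos_inf (s_iword v) = twopos_inf v" unfolding twopos_inf_def a by simp
  moreover have "g_inf (s_iword v) = g_inf v" unfolding g_inf_def b \<open>twopos_inf (s_iword v) = twopos_inf v\<close> by simp
  ultimately show ?thesis unfolding pi_inf_def by simp
qed

definition PN :: "iword \<Rightarrow> nat \<Rightarrow> real" where
  "PN v N = (\<Prod>j\<in>{j. j \<le> N \<and> has_two_inf v j \<and> g_inf v j > 1}. (real (g_inf v j) - 1) / real (g_inf v j))"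

lemma PN_Suc: "PN v (Suc N) = PN v N * (if has_two_inf v (Suc N) \<and> g_inf v (Suc N) > 1
    then (real (g_inf v (Suc N)) - 1) / real (g_inf v (Suc N)) else 1)"
proof -
  let ?S = "\<lambda>N. {j. j \<le> N \<and> has_two_inf v j \<and> g_inf v j > 1}"
  have "?S (Suc N) = ?S N \<union> (if has_two_inf v (Suc N) \<and> g_inf v (Suc N) > 1 then {Suc N} else {})"
    by (auto simp: le_Suc_eq)
  moreover have "finite (?S N)" by (rule finite_subset[of _ "{..N}"]) auto
  ultimately show ?thesis unfolding PN_def by (auto simp: prod.union_disjoint)
qed

lemma PN_factor: "g > (1::nat) \<Longrightarrow> 0 \<le> (real g - 1) / real g \<and> (real g - 1) / real g \<le> 1"
  by auto

lemma PN_nonneg: "PN v N \<ge> 0"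
  unfolding PN_def by (rule prod_nonneg) auto

lemma PN_dec: "decseq (PN v)"
proof (rule decseq_SucI)
  fix N
  let ?c = "(if has_two_inf v (Suc N) \<and> g_inf v (Suc N) > 1
    then (real (g_inf v (Suc N)) - 1) / real (g_inf v (Suc N)) else 1)"
  have "?c \<le> 1" by auto
  then have "PN v N * ?c \<le> PN v N"
    using PN_nonneg[of v N] by (intro mult_left_le)
  then show "PN v (Suc N) \<le> PN v N" by (simp add: PN_Suc)
qed

lemma PN_conv: "PN v \<longlonglongrightarrow> pi_inf v"
proof -
  have "convergent (PN v)"
  proof (rule Bseq_monoseq_convergent)
    have "norm (PN v n) \<le> PN v 0" for n
      using decseqD[OF PN_dec, of 0 n] PN_nonneg[of v n] by simp
    then show "Bseq (PN v)" by (intro BseqI') 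
    show "monoseq (PN v)" using PN_dec by (simp add: decseq_imp_monoseq)
  qed
  then show ?thesis unfolding pi_inf_def PN_def[symmetric] by (simp add: convergent_LIMSEQ_iff)
qed

lemma pi_inf_le_PN: "pi_inf v \<le> PN v N"
  using PN_dec PN_conv by (rule decseq_ge)

lemma pi_inf_nonneg: "pi_inf v \<ge> 0"
  using PN_conv PN_nonneg by (intro LIMSEQ_le_const[of "PN v"]) auto

lemma two_inf_match:
  assumes "1 \<le> j" "j \<le> dcount (tk v k)"
  shows "has_two_inf v j \<and> g_inf v j = g_fin (tk v k) j"
proof -
  obtain p where p: "p < k" "rev (tk v k) ! p = Two" "card {q. q < p \<and> rev (tk v k) ! q = Two} = j - 1"
    using TPR[of j "rev (tk v k)"] assms by (auto simp: dcount_rev)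
  have vp: "v p = Two" using p tk_nth by metis
  have cs: "{q. q < p \<and> rev (tk v k) ! q = Two} = {q. q < p \<and> v q = Two}"
    using p(1) tk_nth[of _ k v] by auto
  have h: "has_two_inf v j" unfolding has_two_inf_def using assms vp p(3) cs by auto
  have t1: "twopos_inf v j = p"
    unfolding twopos_inf_def
  proof (rule the_equality)
    show "v p = Two \<and> card {q. q < p \<and> v q = Two} = j - 1" using vp p(3) cs by simp
  next
    fix q assume "v q = Two \<and> card {k. k < q \<and> v k = Two} = j - 1"
    then show "q = p" using vp p(3) cs count_unique[of "\<lambda>k. v k = Two" q p] by auto
  qed
  have t2: "twopos_fin (tk v k) j = p" using p by (intro twopos_fin_eq) auto
  have "(\<Sum>q\<le>p. lval (v q)) = (\<Sum>q\<le>p. lval (rev (tk v k) ! q))"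
    using p(1) by (intro sum.cong) (auto simp: tk_nth)
  then show ?thesis using h unfolding g_inf_def g_fin_def t1 t2 by simp
qed

lemma g_match: "1 \<le> j \<Longrightarrow> j \<le> dcount (tk v k) \<Longrightarrow> g_inf v j = g_fin (tk v k) j"
  using two_inf_match by blast

lemma PN_tk: "PN v (dcount (tk v k)) = pi_fin (tk v k)"
proof -
  have "{j. j \<le> dcount (tk v k) \<and> has_two_inf v j \<and> g_inf v j > 1}
      = {j. 1 \<le> j \<and> j \<le> dcount (tk v k) \<and> g_fin (tk v k) j > 1}"
    using two_inf_match[of _ v k] by (auto simp: has_two_inf_def)
  then show ?thesis unfolding PN_def pi_fin_def
    by (intro prod.cong) (auto simp: g_match)
qed

lemma pi_inf_le_tk: "pi_inf v \<le> pi_fin (tk v k)"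
  using pi_inf_le_PN[of v "dcount (tk v k)"] PN_tk by simp

definition adm :: "nat \<Rightarrow> iword \<Rightarrow> real \<Rightarrow> (nat \<Rightarrow> word) \<Rightarrow> bool" where
  "adm r v \<beta> vs \<longleftrightarrow> (\<forall>n. wf_word r (vs n)) \<and> letterwise vs v
        \<and> (\<lambda>n. pi_fin (vs n)) \<longlonglongrightarrow> \<beta> * pi_inf v"

lemma wsize_replicate[simp]: "wsize (replicate m Two) = 2 * m"
  by (induction m) auto

lemma wsize_replicate_Two: "wsize (replicate m Two @ t) = 2 * m + wsize t"
  by simp

lemma pi_fin_rep_Suc:
  assumes "wsize t \<ge> 1"
  shows "pi_fin (replicate (Suc m) Two @ t) = real (2 * m + wsize t) / real (2 * m + wsize t + 1) * pi_fin (replicate m Two @ t)"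
proof -
  have "pi_fin (replicate (Suc m) Two @ t) = pi_fin (Two # (replicate m Two @ t))" by simp
  also have "\<dots> = real (2 * m + wsize t) / real (2 * m + wsize t + 1) * pi_fin (replicate m Two @ t)"
    using assms by (simp add: pi_fin_Two wsize_replicate_Two)
  finally show ?thesis .
qed

lemma pi_fin_rep_sq:
  assumes "wsize t \<ge> 1"
  shows "(pi_fin (replicate m Two @ t))^2 \<le> real (wsize t) / real (wsize t + 2 * m)"
proof (induction m)
  case 0
  have "(pi_fin t)^2 \<le> 1" using pi_fin_le1[of t] pi_fin_pos[of t] by (simp add: power_le_one)
  moreover have "t \<noteq> []" using assms by (cases t) auto
  ultimately show ?case using assms by simp
next
  case (Suc m)
  let ?W = "real (2 * m + wsize t)"
  have W1: "?W \<ge> 1" using assms by simp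
  have "(pi_fin (replicate (Suc m) Two @ t))^2 = (?W / (?W + 1))^2 * (pi_fin (replicate m Two @ t))^2"
    using pi_fin_rep_Suc[OF assms, of m] by (simp add: power_mult_distrib power_divide add.commute)
  also have "\<dots> \<le> (?W / (?W + 1))^2 * (real (wsize t) / ?W)"
    using Suc by (intro mult_left_mono) (auto simp: algebra_simps)
  also have "\<dots> \<le> real (wsize t) / (?W + 2)"
  proof -
    have "(?W / (?W + 1))^2 * (real (wsize t) / ?W) = real (wsize t) * (?W / (?W + 1)^2)"
    proof -
      have "(a/(a+1))^2 * (b/a) = b * (a/(a+1)^2)" if "(a::real) > 0" for a b
        using that by (simp add: power_divide power2_eq_square)
      then show ?thesis using W1 by simp
    qed
    also have "?W / (?W + 1)^2 \<le> 1 / (?W + 2)"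
    proof -
      have "a/(a+1)^2 \<le> 1/(a+2)" if "(a::real) \<ge> 1" for a
        using that by (simp add: divide_simps power2_eq_square) (simp add: algebra_simps)
      then show ?thesis using W1 by blast
    qed
    then have "real (wsize t) * (?W / (?W + 1)^2) \<le> real (wsize t) * (1 / (?W + 2))"
      by (intro mult_left_mono) auto
    finally show ?thesis by simp
  qed
  also have "\<dots> = real (wsize t) / real (wsize t + 2 * Suc m)" by simp
  finally show ?case .
qed

lemma exists_small:
  assumes "wsize t \<ge> 1" "\<tau> > 0"
  shows "\<exists>m. pi_fin (replicate m Two @ t) \<le> \<tau>"
proof -
  define s where "s = real (wsize t)"
  have s1: "s \<ge> 1" using assms s_def by simp
  obtain m :: nat where m: "real m \<ge> s / \<tau>^2" using real_arch_simple by blast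
  have mpos: "real m > 0" using m s1 assms(2) by (smt (verit) divide_pos_pos zero_less_power)
  have "s / (s + 2 * real m) \<le> s / (2 * real m)" using s1 mpos by (intro divide_left_mono) auto
  also have "\<dots> \<le> \<tau>^2 / 2" using m mpos assms(2) by (simp add: field_simps)
  also have "\<dots> < \<tau>^2" using assms(2) by simp
  finally have "(pi_fin (replicate m Two @ t))^2 < \<tau>^2"
    using pi_fin_rep_sq[OF assms(1), of m] s_def by simp
  then have "pi_fin (replicate m Two @ t) < \<tau>"
    using assms(2) pi_fin_pos by (smt (verit) power_mono)
  then show ?thesis using less_imp_le by blast
qed

lemma letterwise_append:
  assumes "\<And>n. vs n = pre n @ tk v (Suc n)"
  shows "letterwise vs v"
  unfolding letterwise_def
proof
  fix k
  show "\<forall>\<^sub>F n in sequentially. k \<le> length (vs n) \<and> (\<forall>p<k. rev (vs n) ! p = v p)"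
  proof (rule eventually_sequentiallyI[of k])
    fix n assume "k \<le> n"
    then show "k \<le> length (vs n) \<and> (\<forall>p<k. rev (vs n) ! p = v p)"
      using assms[of n] by (auto simp: nth_append tk_nth)
  qed
qed

lemma exists_adm:
  assumes "wf_iword r v" "0 < \<beta>" "\<beta> \<le> 1" "pi_inf v > 0"
  shows "\<exists>vs. adm r v \<beta> vs"
proof -
  define \<tau> where "\<tau> = \<beta> * pi_inf v"
  have tpos: "\<tau> > 0" using assms \<tau>_def by simp
  have tle: "\<tau> \<le> pi_fin (tk v k)" for k
  proof -
    have "\<beta> * pi_inf v \<le> 1 * pi_inf v" by (rule mult_right_mono) (use assms pi_inf_nonneg in auto)
    then show ?thesis using pi_inf_le_tk[of v k] \<tau>_def by simp
  qed
  define h where "h n m = pi_fin (replicate m Two @ tk v (Suc n))" for n m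
  have ws: "wsize (tk v (Suc n)) \<ge> Suc n" for n using tk_wsize by blast
  define M where "M n = (LEAST m. h n m \<le> \<tau>)" for n
  have ex: "\<exists>m. h n m \<le> \<tau>" for n
  proof -
    have "wsize (tk v (Suc n)) \<ge> 1" using ws[of n] by simp
    then show ?thesis unfolding h_def using exists_small[OF _ tpos] by blast
  qed
  have up: "h n (M n) \<le> \<tau>" for n unfolding M_def using ex[of n] by (rule LeastI_ex)
  have low: "\<tau> * (1 + - inverse (real (Suc n))) \<le> h n (M n)" for n
  proof (cases "M n")
    case 0
    then have "h n (M n) = pi_fin (tk v (Suc n))" by (simp add: h_def)
    then have "h n (M n) \<ge> \<tau>" using tle by simp
    moreover have "\<tau> * (1 + - inverse (real (Suc n))) \<le> \<tau>" using tpos by (simp add: mult_left_le)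
    ultimately show ?thesis by linarith
  next
    case (Suc m')
    have gt: "h n m' > \<tau>" using not_less_Least[of m' "\<lambda>m. h n m \<le> \<tau>"] Suc unfolding M_def by auto
    let ?W = "real (2 * m' + wsize (tk v (Suc n)))"
    have W: "?W \<ge> real (Suc n)" using ws[of n] by simp
    have e: "h n (M n) = ?W / (?W + 1) * h n m'"
      unfolding h_def Suc using pi_fin_rep_Suc[of "tk v (Suc n)" m'] ws[of n] by simp
    have "1 + - inverse (real (Suc n)) \<le> ?W / (?W + 1)"
    proof -
      have "1 + - inverse (real (Suc n)) \<le> 1 - 1 / (?W + 1)"
        using W by (simp add: field_simps)
      also have "\<dots> = ?W / (?W + 1)" using W by (simp add: field_simps)
      finally show ?thesis .
    qed
    moreover have "0 \<le> 1 + - inverse (real (Suc n))" by (simp add: field_simps)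
    ultimately have "\<tau> * (1 + - inverse (real (Suc n))) \<le> h n m' * (?W / (?W + 1))"
      using gt tpos by (intro mult_mono) auto
    then show ?thesis using e by (simp add: mult.commute)
  qed
  define vs where "vs n = replicate (M n) Two @ tk v (Suc n)" for n
  have "adm r v \<beta> vs"
    unfolding adm_def
  proof (intro conjI allI)
    fix n show "wf_word r (vs n)"
      using tk_wf[OF assms(1)] unfolding vs_def wf_word_def by auto
  next
    show "letterwise vs v" by (rule letterwise_append[of _ "\<lambda>n. replicate (M n) Two"]) (simp add: vs_def)
  next
    have "(\<lambda>n. h n (M n)) \<longlonglongrightarrow> \<tau>"
    proof (rule tendsto_sandwich[OF _ _ LIMSEQ_inverse_real_of_nat_add_minus_mult tendsto_const])
      show "\<forall>\<^sub>F n in sequentially. \<tau> * (1 + - inverse (real (Suc n))) \<le> h n (M n)" using low by simp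
      show "\<forall>\<^sub>F n in sequentially. h n (M n) \<le> \<tau>" using up by simp
    qed
    then show "(\<lambda>n. pi_fin (vs n)) \<longlonglongrightarrow> \<beta> * pi_inf v" unfolding vs_def h_def \<tau>_def .
  qed
  then show ?thesis by blast
qed

definition Kr :: "nat \<Rightarrow> word \<Rightarrow> word \<Rightarrow> real" where
  "Kr r w y = real (dpaths r w y) / real (dpaths r [] y)"

lemma ratio_Kr: "ratio r w y = real (dpaths r [] w) * Kr r w y"
  by (simp add: ratio_def Kr_def)

fun Fp :: "word \<Rightarrow> word \<Rightarrow> real \<Rightarrow> real" where
  "Fp [] z a = 1"
| "Fp (One i # q) z a = Fp q z a"
| "Fp (Two # q) z a = (1 - a / (real (wsize (q @ z)) + 1)) * Fp q z a"

lemma Fp_append: "Fp (q @ m) z a = Fp q (m @ z) a * Fp m z a"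
proof (induction q)
  case Nil then show ?case by simp
next
  case (Cons l q) then show ?case by (cases l) auto
qed

lemma Fp_zero[simp]: "Fp q z 0 = 1"
proof (induction q)
  case Nil then show ?case by simp
next
  case (Cons l q) then show ?case by (cases l) auto
qed

lemma pi_fin_append: "wsize z \<ge> 1 \<Longrightarrow> pi_fin (q @ z) = Fp q z 1 * pi_fin z"
proof (induction q)
  case Nil then show ?case by simp
next
  case (Cons l q)
  show ?case
  proof (cases l)
    case (One i) then show ?thesis using Cons by (simp add: pi_fin_One)
  next
    case Two
    have W: "wsize (q @ z) \<ge> 1" using Cons.prems by simp
    have "real (wsize (q @ z)) / real (wsize (q @ z) + 1) = 1 - 1 / (real (wsize (q @ z)) + 1)"
      by (simp add: field_simps)
    then show ?thesis using Cons Two W by (simp add: pi_fin_Two)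
  qed
qed

lemma Kr_Nil: "r \<ge> 1 \<Longrightarrow> Kr r [] y = 1"
  using dpaths_Nil_pos[of r y] by (simp add: Kr_def)

lemma Kr_One: "wsize w \<le> wsize x \<Longrightarrow> Kr r w (One i # x) = Kr r w x"
proof -
  assume "wsize w \<le> wsize x"
  then have "w \<noteq> One i # x" by auto
  then show ?thesis by (simp add: Kr_def dpaths_One dpaths_Nil_One)
qed

lemma Kr_Two:
  assumes "r \<ge> 1" "ecnd r w" "wsize w \<le> wsize x + 1"
  shows "Kr r w (Two # x) = (1 - real (wsize w) / (real (wsize x) + 1)) * Kr r w x
     + (1 / real r) / (real (wsize x) + 1) * Kr r (tl w) x"
proof -
  have d0: "real (dpaths r [] x) > 0" using dpaths_Nil_pos[OF assms(1)] by simp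
  have r0: "real r > 0" using assms(1) by simp
  have e: "real (wsize x + 1 - wsize w) = real (wsize x) + 1 - real (wsize w)" using assms(3) by simp
  have n: "dpaths r w (Two # x) = r * (wsize x + 1 - wsize w) * dpaths r w x + dpaths r (tl w) x"
    using dpaths_Two[of r w x] assms(2) by simp
  then have "real (dpaths r w (Two # x)) = real r * real (wsize x + 1 - wsize w) * real (dpaths r w x) + real (dpaths r (tl w) x)"
    by (simp only: of_nat_add of_nat_mult)
  then have n': "real (dpaths r w (Two # x)) = real r * (real (wsize x) + 1 - real (wsize w)) * real (dpaths r w x) + real (dpaths r (tl w) x)"
    using e by simp
  have dn: "real (dpaths r [] (Two # x)) = real r * (real (wsize x) + 1) * real (dpaths r [] x)"
    using dpaths_Nil_Two[of r x] by (simp add: algebra_simps)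
  have "Kr r w (Two # x) = (real r * (real (wsize x) + 1 - real (wsize w)) * real (dpaths r w x) + real (dpaths r (tl w) x))
     / (real r * (real (wsize x) + 1) * real (dpaths r [] x))"
    unfolding Kr_def n' dn ..
  also have "\<dots> = (1 - real (wsize w) / (real (wsize x) + 1)) * Kr r w x
     + (1 / real r) / (real (wsize x) + 1) * Kr r (tl w) x"
  proof -
    have g: "(R*(S - a)*d + e)/(R*S*D) = (1 - a/S)*(d/D) + (1/R)/S*(e/D)"
      if "(R::real) > 0" "D > 0" "S > 0" for R D S a d e
      using that by (simp add: field_simps)
    show ?thesis unfolding Kr_def
      by (rule g) (use d0 r0 in auto)
  qed
  finally show ?thesis .
qed

lemma wsize_drop_less:
  assumes "t < i" "i \<le> length w"
  shows "wsize (drop i w) < wsize (drop t w)"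
proof -
  have "drop t w = take (i - t) (drop t w) @ drop (i - t) (drop t w)" by (rule append_take_drop_id[symmetric])
  also have "drop (i - t) (drop t w) = drop i w" using assms by simp
  finally have e: "wsize (drop t w) = wsize (take (i - t) (drop t w)) + wsize (drop i w)"
    by (metis wsize_append)
  have "take (i - t) (drop t w) \<noteq> []" using assms by simp
  then have "wsize (take (i - t) (drop t w)) > 0" using wsize_zero_iff by blast
  then show ?thesis using e by simp
qed

lemma wsize_drop_le: "wsize (drop t w) \<le> wsize w"
proof -
  have "wsize w = wsize (take t w) + wsize (drop t w)" by (metis append_take_drop_id wsize_append)
  then show ?thesis by simp
qed

lemma LC_aux:
  assumes r: "r \<ge> 1" and wf: "wf_word r w" and wx: "wsize w \<le> wsize x" and n: "n \<le> length w"
  shows "\<exists>B. \<forall>p. Kr r (drop (length w - n) w) (p @ x)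
     = (\<Sum>i\<in>{length w - n..length w}. B i * Fp p x (real (wsize (drop i w))))"
  using n
proof (induction n)
  case 0
  have "Kr r (drop (length w) w) (p @ x) = (\<Sum>i\<in>{length w..length w}. (\<lambda>_. 1) i * Fp p x (real (wsize (drop i w))))" for p
    using Kr_Nil[OF r] by simp
  then show ?case by auto
next
  case (Suc n)
  define t where "t = length w - Suc n"
  have tl': "t < length w" "Suc t = length w - n" using Suc.prems t_def by auto
  obtain B' where B': "\<And>p. Kr r (drop (Suc t) w) (p @ x)
     = (\<Sum>i\<in>{Suc t..length w}. B' i * Fp p x (real (wsize (drop i w))))"
    using Suc tl' by auto
  define a where "a i = real (wsize (drop i w))" for i
  define c where "c = 1 / real r"
  define B where "B i = (if i = t then Kr r (drop t w) x - (\<Sum>j\<in>{Suc t..length w}. c * B' j / (a t - a j))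
       else c * B' i / (a t - a i))" for i
  have agt: "a t > a i" if "i \<in> {Suc t..length w}" for i
    using wsize_drop_less[of t i w] that unfolding a_def by auto
  have split: "(\<Sum>i\<in>{t..length w}. f i) = f t + (\<Sum>i\<in>{Suc t..length w}. f i)" for f :: "nat \<Rightarrow> real"
  proof -
    have "{t..length w} = insert t {Suc t..length w}" using tl' by auto
    then show ?thesis by simp
  qed
  have main: "Kr r (drop t w) (p @ x) = (\<Sum>i\<in>{t..length w}. B i * Fp p x (a i))" for p
  proof (induction p)
    case Nil
    have "(\<Sum>i\<in>{t..length w}. B i * Fp [] x (a i)) = B t + (\<Sum>i\<in>{Suc t..length w}. B i)"
      by (simp add: split)
    also have "(\<Sum>i\<in>{Suc t..length w}. B i) = (\<Sum>j\<in>{Suc t..length w}. c * B' j / (a t - a j))"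
      unfolding B_def by (intro sum.cong) auto
    finally show ?case unfolding B_def by simp
  next
    case (Cons l p)
    have wt: "wsize (drop t w) \<le> wsize (p @ x)" using wsize_drop_le[of t w] wx by simp
    show ?case
    proof (cases l)
      case (One i)
      then show ?thesis using Cons Kr_One[OF wt] by simp
    next
      case Two
      let ?s = "real (wsize (p @ x))"
      let ?F = "\<lambda>i. Fp p x (a i)"
      have ne: "drop t w \<noteq> []" using tl' by simp
      have ec: "ecnd r (drop t w)"
      proof -
        obtain l' rest where d: "drop t w = l' # rest" using ne by (cases "drop t w") auto
        have "l' \<in> set w" using d by (metis in_set_dropD list.set_intros(1))
        then show ?thesis using d wf by (simp add: wf_word_def)
      qed
      have tlw: "tl (drop t w) = drop (Suc t) w" by (simp add: drop_Suc tl_drop)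
      have s0: "?s + 1 > 0" by simp
      have "Kr r (drop t w) ((Two # p) @ x) = (1 - a t / (?s + 1)) * Kr r (drop t w) (p @ x)
          + c / (?s + 1) * Kr r (drop (Suc t) w) (p @ x)"
        using Kr_Two[OF r ec, of "p @ x"] wt tlw unfolding a_def c_def by simp
      also have "\<dots> = (1 - a t / (?s + 1)) * (B t * ?F t) + (\<Sum>i\<in>{Suc t..length w}.
            (1 - a t / (?s + 1)) * (B i * ?F i) + c / (?s + 1) * (B' i * ?F i))"
      proof -
        have "(1 - a t / (?s + 1)) * Kr r (drop t w) (p @ x) = (1 - a t / (?s + 1)) * (B t * ?F t)
            + (1 - a t / (?s + 1)) * (\<Sum>i\<in>{Suc t..length w}. B i * ?F i)"
          unfolding Cons.IH split by (simp add: distrib_left)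
        moreover have "c / (?s + 1) * Kr r (drop (Suc t) w) (p @ x) = c / (?s + 1) * (\<Sum>i\<in>{Suc t..length w}. B' i * ?F i)"
          unfolding B' a_def by simp
        moreover have "(1 - a t / (?s + 1)) * (\<Sum>i\<in>{Suc t..length w}. B i * ?F i) + c / (?s + 1) * (\<Sum>i\<in>{Suc t..length w}. B' i * ?F i)
            = (\<Sum>i\<in>{Suc t..length w}. (1 - a t / (?s + 1)) * (B i * ?F i) + c / (?s + 1) * (B' i * ?F i))"
          by (simp add: sum.distrib sum_distrib_left)
        ultimately show ?thesis by linarith
      qed
      also have "(\<Sum>i\<in>{Suc t..length w}. (1 - a t / (?s + 1)) * (B i * ?F i) + c / (?s + 1) * (B' i * ?F i))
          = (\<Sum>i\<in>{Suc t..length w}. B i * ((1 - a i / (?s + 1)) * ?F i))"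
      proof (rule sum.cong)
        fix i assume i: "i \<in> {Suc t..length w}"
        have ne0: "a t - a i \<noteq> 0" using agt[OF i] by simp
        have Bi: "B i = c * B' i / (a t - a i)" using i unfolding B_def by auto
        then have Bi': "B i * (a t - a i) = c * B' i" using ne0 by simp
        have "(1 - a t / (?s + 1)) * B i + c / (?s + 1) * B' i = B i * (1 - a i / (?s + 1))"
        proof -
          have "(1 - a t / (?s + 1)) * B i + c / (?s + 1) * B' i
              = B i - (B i * a t) / (?s + 1) + (c * B' i) / (?s + 1)" by (simp add: algebra_simps)
          also have "\<dots> = B i - (B i * a t) / (?s + 1) + (B i * (a t - a i)) / (?s + 1)" using Bi' by simp
          also have "\<dots> = B i * (1 - a i / (?s + 1))"
          proof -
            have "(b::real) - (b * xt) / D + (b * (xt - xi)) / D = b * (1 - xi / D)" for b xt xi D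
              by (simp add: diff_divide_distrib right_diff_distrib)
            then show ?thesis by blast
          qed
          finally show ?thesis .
        qed
        then show "(1 - a t / (?s + 1)) * (B i * ?F i) + c / (?s + 1) * (B' i * ?F i)
          = B i * ((1 - a i / (?s + 1)) * ?F i)"
          by (metis (no_types, lifting) distrib_right mult.assoc)
      qed simp
      also have "(1 - a t / (?s + 1)) * (B t * ?F t) + (\<Sum>i\<in>{Suc t..length w}. B i * ((1 - a i / (?s + 1)) * ?F i))
          = (\<Sum>i\<in>{t..length w}. B i * Fp ((Two # p)) x (a i))"
        unfolding split by (simp add: algebra_simps)
      finally show ?thesis using Two by simp
    qed
  qed
  then show ?case unfolding a_def t_def by blast
qed

lemma LC:
  assumes "r \<ge> 1" "wf_word r w" "wsize w \<le> wsize x"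
  shows "\<exists>B. \<forall>p. Kr r w (p @ x) = (\<Sum>i\<in>{0..length w}. B i * Fp p x (real (wsize (drop i w))))"
  using LC_aux[OF assms, of "length w"] by simp

lemma Fp_range:
  assumes "0 \<le> a" "a \<le> real (wsize z) + 1"
  shows "0 \<le> Fp q z a \<and> Fp q z a \<le> 1"
proof (induction q)
  case Nil then show ?case by simp
next
  case (Cons l q)
  show ?case
  proof (cases l)
    case (One i) then show ?thesis using Cons by simp
  next
    case Two
    let ?s = "real (wsize (q @ z))"
    have "a \<le> ?s + 1" using assms(2) by simp
    then have f: "0 \<le> 1 - a / (?s + 1)" "1 - a / (?s + 1) \<le> 1"
      using assms(1) by (auto simp: field_simps)
    then show ?thesis using Cons Two by (auto intro: mult_le_one)
  qed
qed

lemma Fp_pos: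
  assumes "0 \<le> a" "a < real (wsize z) + 1"
  shows "0 < Fp q z a"
proof (induction q)
  case Nil then show ?case by simp
next
  case (Cons l q)
  show ?case
  proof (cases l)
    case (One i) then show ?thesis using Cons by simp
  next
    case Two
    let ?s = "real (wsize (q @ z))"
    have "a < ?s + 1" using assms(2) by simp
    then have "0 < 1 - a / (?s + 1)" by (auto simp: field_simps)
    then show ?thesis using Cons Two by auto
  qed
qed

lemma KI_upper:
  fixes a :: nat
  assumes "real a \<le> real (wsize z) + 1"
  shows "Fp q z (real a) \<le> (Fp q z 1) ^ a"
proof (induction q)
  case Nil then show ?case by simp
next
  case (Cons l q)
  show ?case
  proof (cases l)
    case (One i) then show ?thesis using Cons by simp
  next
    case Two
    let ?s = "real (wsize (q @ z))"
    let ?x = "1 / (?s + 1)"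
    have x: "0 \<le> ?x" "?x \<le> 1" by (auto simp: field_simps)
    have B: "1 - real a * ?x \<le> (1 - ?x) ^ a"
      using Bernoulli_inequality[of "- ?x" a] x by simp
    have "a \<le> ?s + 1" using assms by simp
    then have fa: "0 \<le> 1 - real a * ?x" by (auto simp: field_simps)
    have r: "0 \<le> Fp q z (real a)" using Fp_range[of "real a" z q] assms by simp
    have "Fp (Two # q) z (real a) = (1 - real a * ?x) * Fp q z (real a)" by simp
    also have "\<dots> \<le> (1 - ?x) ^ a * (Fp q z 1) ^ a"
      using B Cons fa r by (intro mult_mono) auto
    also have "\<dots> = (Fp (Two # q) z 1) ^ a" by (simp add: power_mult_distrib)
    finally show ?thesis using Two by simp
  qed
qed

lemma KI_lower:
  fixes a :: nat
  assumes "2 * real a \<le> real (wsize z) + 1" "wsize z \<ge> 1"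
  shows "(Fp q z 1) powr (real a + 2 * real a ^ 2 / (real (wsize z) + 1)) \<le> Fp q z (real a)"
proof (induction q)
  case Nil then show ?case by simp
next
  case (Cons l q)
  show ?case
  proof (cases l)
    case (One i) then show ?thesis using Cons by simp
  next
    case Two
    let ?e = "real a + 2 * real a ^ 2 / (real (wsize z) + 1)"
    let ?s = "real (wsize (q @ z))"
    let ?x = "1 / (?s + 1)"
    have sz: "?s \<ge> real (wsize z)" by simp
    have x: "0 < ?x" "?x \<le> 1 / (real (wsize z) + 1)" using sz by (auto simp: field_simps)
    have x1: "?x < 1" using assms(2) sz by (auto simp: field_simps)
    have ax: "real a * ?x \<le> 1/2"
    proof -
      have "real a * ?x \<le> real a * (1 / (real (wsize z) + 1))" using x by (intro mult_left_mono) auto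
      also have "\<dots> \<le> 1/2" using assms(1) by (simp add: field_simps)
      finally show ?thesis .
    qed
    have e0: "?e \<ge> 0" by simp
    have l1: "ln (1 - ?x) \<le> - ?x" using ln_one_minus_pos_upper_bound[of ?x] x x1 by simp
    have l2: "- (real a * ?x) - 2 * (real a * ?x)^2 \<le> ln (1 - real a * ?x)"
      using ln_one_minus_pos_lower_bound[of "real a * ?x"] ax x by simp
    have "?e * ln (1 - ?x) \<le> ?e * (- ?x)" using l1 e0 by (intro mult_left_mono) auto
    also have "\<dots> = - (real a * ?x) - 2 * real a ^ 2 * ?x * (1 / (real (wsize z) + 1))"
      by (simp add: algebra_simps)
    also have "\<dots> \<le> - (real a * ?x) - 2 * real a ^ 2 * ?x * ?x"
    proof -
      have "2 * real a ^ 2 * ?x * ?x \<le> 2 * real a ^ 2 * ?x * (1 / (real (wsize z) + 1))"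
        using x by (intro mult_left_mono) auto
      then show ?thesis by linarith
    qed
    also have "\<dots> = - (real a * ?x) - 2 * (real a * ?x)^2" by (simp add: power2_eq_square algebra_simps)
    also have "\<dots> \<le> ln (1 - real a * ?x)" by (rule l2)
    finally have le: "?e * ln (1 - ?x) \<le> ln (1 - real a * ?x)" .
    have fa: "0 < 1 - real a * ?x" using ax by simp
    have f1: "0 < 1 - ?x" using x1 by simp
    have p1: "(1 - ?x) powr ?e \<le> 1 - real a * ?x"
    proof -
      have "(1 - ?x) powr ?e = exp (?e * ln (1 - ?x))" using f1 by (simp add: powr_def)
      also have "\<dots> \<le> exp (ln (1 - real a * ?x))" using le by simp
      also have "\<dots> = 1 - real a * ?x" using fa by simp
      finally show ?thesis .
    qed
    have r1: "0 \<le> Fp q z 1" using Fp_range[of 1 z q] by simp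
    have "Fp (Two # q) z 1 powr ?e = ((1 - ?x) * Fp q z 1) powr ?e" by simp
    also have "\<dots> = (1 - ?x) powr ?e * (Fp q z 1) powr ?e" by (rule powr_mult)
    also have "\<dots> \<le> (1 - real a * ?x) * Fp q z (real a)"
      using p1 Cons fa by (intro mult_mono) (auto simp: less_imp_le)
    also have "\<dots> = Fp (Two # q) z (real a)" by simp
    finally show ?thesis using Two by simp
  qed
qed

lemma double_squeeze:
  fixes f :: "nat \<Rightarrow> real"
  assumes ev: "\<And>j. j \<ge> J \<Longrightarrow> eventually (\<lambda>n. lo j n \<le> f n \<and> f n \<le> hi j n) sequentially"
    and llo: "\<And>j. j \<ge> J \<Longrightarrow> lo j \<longlonglongrightarrow> Lo j"
    and lhi: "\<And>j. j \<ge> J \<Longrightarrow> hi j \<longlonglongrightarrow> Hi j"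
    and Lo: "Lo \<longlonglongrightarrow> L" and Hi: "Hi \<longlonglongrightarrow> L"
  shows "f \<longlonglongrightarrow> L"
proof (rule order_tendstoI)
  fix a assume a: "a < L"
  obtain N where N: "\<And>j. j \<ge> N \<Longrightarrow> a < Lo j"
    using order_tendstoD(1)[OF Lo a] by (auto simp: eventually_sequentially)
  define j where "j = max N J"
  have "a < Lo j" using N j_def by simp
  then have "eventually (\<lambda>n. a < lo j n) sequentially" using llo[of j] j_def by (auto dest: order_tendstoD(1))
  then show "eventually (\<lambda>n. a < f n) sequentially"
    using ev[of j] j_def by (auto elim: eventually_elim2)
next
  fix a assume a: "L < a"
  obtain N where N: "\<And>j. j \<ge> N \<Longrightarrow> Hi j < a"
    using order_tendstoD(2)[OF Hi a] by (auto simp: eventually_sequentially)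
  define j where "j = max N J"
  have "Hi j < a" using N j_def by simp
  then have "eventually (\<lambda>n. hi j n < a) sequentially" using lhi[of j] j_def by (auto dest: order_tendstoD(2))
  then show "eventually (\<lambda>n. f n < a) sequentially"
    using ev[of j] j_def by (auto elim: eventually_elim2)
qed

definition mk :: "iword \<Rightarrow> nat \<Rightarrow> nat \<Rightarrow> word" where
  "mk v n0 k = take (k - n0) (tk v k)"

lemma tk_split: "n0 \<le> k \<Longrightarrow> tk v k = mk v n0 k @ tk v n0"
proof -
  assume a: "n0 \<le> k"
  have "[0..<k] = [0..<n0] @ [n0..<k]" using upt_add_eq_append[of 0 n0 "k - n0"] a by simp
  then have e: "tk v k = rev (map v [n0..<k]) @ tk v n0" by (simp add: tk_def)
  have "mk v n0 k = rev (map v [n0..<k])" unfolding mk_def e by simp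
  then show ?thesis using e by simp
qed

lemma mk_Suc: "n0 \<le> k \<Longrightarrow> mk v n0 (Suc k) = v k # mk v n0 k"
proof -
  assume a: "n0 \<le> k"
  have "mk v n0 (Suc k) @ tk v n0 = (v k # mk v n0 k) @ tk v n0"
    using tk_split[of n0 "Suc k" v] tk_split[OF a, of v] a by (simp add: tk_Suc)
  then show ?thesis by simp
qed

definition Phi :: "iword \<Rightarrow> nat \<Rightarrow> nat \<Rightarrow> real \<Rightarrow> real" where
  "Phi v n0 j a = Fp (mk v n0 (n0 + j)) (tk v n0) a"

definition PhiL :: "iword \<Rightarrow> nat \<Rightarrow> real \<Rightarrow> real" where
  "PhiL v n0 a = lim (\<lambda>j. Phi v n0 j a)"

lemma Phi_dec:
  assumes "0 \<le> a" "a \<le> real (wsize (tk v n0)) + 1"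
  shows "decseq (\<lambda>j. Phi v n0 j a)"
proof (rule decseq_SucI)
  fix j
  have m: "mk v n0 (n0 + Suc j) = v (n0 + j) # mk v n0 (n0 + j)" using mk_Suc[of n0 "n0 + j" v] by simp
  have r: "0 \<le> Phi v n0 j a" using Fp_range[OF assms] unfolding Phi_def by blast
  show "Phi v n0 (Suc j) a \<le> Phi v n0 j a"
  proof (cases "v (n0 + j)")
    case (One i) then show ?thesis unfolding Phi_def m by simp
  next
    case Two
    let ?s = "real (wsize (mk v n0 (n0 + j) @ tk v n0))"
    have "0 \<le> a / (?s + 1)" using assms by simp
    then have "0 \<le> a / (?s + 1) * Phi v n0 j a" using r by (rule mult_nonneg_nonneg)
    then have "(1 - a / (?s + 1)) * Phi v n0 j a \<le> Phi v n0 j a"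
      by (simp add: left_diff_distrib)
    then show ?thesis unfolding Phi_def m using Two by simp
  qed
qed

lemma Phi_conv:
  assumes "0 \<le> a" "a \<le> real (wsize (tk v n0)) + 1"
  shows "(\<lambda>j. Phi v n0 j a) \<longlonglongrightarrow> PhiL v n0 a"
proof -
  have "convergent (\<lambda>j. Phi v n0 j a)"
  proof (rule Bseq_monoseq_convergent)
    show "Bseq (\<lambda>j. Phi v n0 j a)"
      using Fp_range[OF assms] unfolding Phi_def by (intro BseqI'[of _ 1]) auto
    show "monoseq (\<lambda>j. Phi v n0 j a)" using Phi_dec[OF assms] by (simp add: decseq_imp_monoseq)
  qed
  then show ?thesis unfolding PhiL_def by (simp add: convergent_LIMSEQ_iff)
qed

lemma inv_lim: "(\<lambda>j. C / (real (wsize (tk v (n0 + j))) + 1)) \<longlonglongrightarrow> 0" if "C \<ge> 0" for C :: real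
proof (rule tendsto_sandwich[OF _ _ tendsto_const])
  show "\<forall>\<^sub>F j in sequentially. 0 \<le> C / (real (wsize (tk v (n0 + j))) + 1)" using that by simp
  show "\<forall>\<^sub>F j in sequentially. C / (real (wsize (tk v (n0 + j))) + 1) \<le> C * inverse (real (Suc j))"
  proof (rule always_eventually, rule allI)
    fix j
    have "real (Suc j) \<le> real (wsize (tk v (n0 + j))) + 1" using tk_wsize[of "n0 + j" v] by simp
    then show "C / (real (wsize (tk v (n0 + j))) + 1) \<le> C * inverse (real (Suc j))"
      using that by (simp add: divide_simps mult_left_mono)
  qed
  show "(\<lambda>j. C * inverse (real (Suc j))) \<longlonglongrightarrow> 0"
    using tendsto_mult_right_zero[OF LIMSEQ_inverse_real_of_nat] by simp
qed

lemma Conv: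
  fixes a :: nat
  assumes x1: "wsize (tk v n0) \<ge> 1" and ax: "real a \<le> real (wsize (tk v n0))"
    and c: "(\<lambda>n. Fp (P n) (tk v n0) 1) \<longlonglongrightarrow> c" "c > 0"
    and H1: "\<And>j. eventually (\<lambda>n. \<exists>q. P n = q @ mk v n0 (n0 + j)) sequentially"
  shows "(\<lambda>n. Fp (P n) (tk v n0) (real a)) \<longlonglongrightarrow> (c / PhiL v n0 1) powr (real a) * PhiL v n0 (real a)"
proof -
  define x where "x = tk v n0"
  define \<phi> where "\<phi> j = Phi v n0 j 1" for j
  define \<psi> where "\<psi> j = Phi v n0 j (real a)" for j
  define z where "z j = tk v (n0 + j)" for j
  have zsplit: "z j = mk v n0 (n0 + j) @ x" for j unfolding z_def x_def by (rule tk_split) simp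
  have wz: "wsize (z j) \<ge> wsize x" for j unfolding zsplit by simp
  have wzj: "wsize (z j) \<ge> n0 + j" for j unfolding z_def by (rule tk_wsize)
  have \<phi>pos: "\<phi> j > 0" for j unfolding \<phi>_def Phi_def using Fp_pos[of 1 x] x1 x_def by simp
  have \<psi>nn: "\<psi> j \<ge> 0" for j unfolding \<psi>_def Phi_def using Fp_range[of "real a" x] ax x_def by simp
  have \<phi>lim: "\<phi> \<longlonglongrightarrow> PhiL v n0 1" unfolding \<phi>_def using Phi_conv[of 1 v n0] x1 by simp
  have \<psi>lim: "\<psi> \<longlonglongrightarrow> PhiL v n0 (real a)" unfolding \<psi>_def using Phi_conv[of "real a" v n0] ax by simp
  have fact: "Fp (P n) x b = Fp q (z j) b * Phi v n0 j b" if "P n = q @ mk v n0 (n0 + j)" for n q j b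
    unfolding that Fp_append Phi_def zsplit x_def ..
  have cle: "c \<le> \<phi> j" for j
  proof (rule tendsto_upperbound[OF c(1)[folded x_def]])
    show "\<forall>\<^sub>F n in sequentially. Fp (P n) x 1 \<le> \<phi> j"
      using H1[of j]
    proof (rule eventually_mono)
      fix n assume "\<exists>q. P n = q @ mk v n0 (n0 + j)"
      then obtain q where q: "P n = q @ mk v n0 (n0 + j)" by blast
      have "Fp q (z j) 1 \<le> 1" using Fp_range[of 1 "z j" q] by simp
      then show "Fp (P n) x 1 \<le> \<phi> j" unfolding fact[OF q] \<phi>_def
        using \<phi>pos[of j] unfolding \<phi>_def by (simp add: mult_left_le_one_le Fp_range)
    qed
  qed simp
  have \<phi>Lpos: "PhiL v n0 1 > 0"
  proof -
    have "c \<le> PhiL v n0 1" by (rule tendsto_lowerbound[OF \<phi>lim]) (use cle in auto)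
    then show ?thesis using c(2) by simp
  qed
  define e where "e j = real a + 2 * real a ^ 2 / (real (wsize (z j)) + 1)" for j
  define lo where "lo j n = (Fp (P n) x 1 / \<phi> j) powr e j * \<psi> j" for j n
  define hi where "hi j n = (Fp (P n) x 1 / \<phi> j) ^ a * \<psi> j" for j n
  show ?thesis
    unfolding x_def[symmetric]
  proof (rule double_squeeze[where J = "2 * a" and lo = lo and hi = hi
        and Lo = "\<lambda>j. (c / \<phi> j) powr e j * \<psi> j" and Hi = "\<lambda>j. (c / \<phi> j) ^ a * \<psi> j"])
    fix j assume j: "2 * a \<le> j"
    show "\<forall>\<^sub>F n in sequentially. lo j n \<le> Fp (P n) x (real a) \<and> Fp (P n) x (real a) \<le> hi j n"
      using H1[of j]
    proof (rule eventually_mono)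
      fix n assume "\<exists>q. P n = q @ mk v n0 (n0 + j)"
      then obtain q where q: "P n = q @ mk v n0 (n0 + j)" by blast
      have base: "Fp (P n) x 1 / \<phi> j = Fp q (z j) 1"
        using fact[OF q, of 1] \<phi>pos[of j] unfolding \<phi>_def by simp
      have fa: "Fp (P n) x (real a) = Fp q (z j) (real a) * \<psi> j"
        using fact[OF q, of "real a"] unfolding \<psi>_def by simp
      have c1: "2 * real a \<le> real (wsize (z j)) + 1" using wzj[of j] j by simp
      have c2: "wsize (z j) \<ge> 1" using wz[of j] x1 x_def by simp
      have L: "Fp q (z j) 1 powr e j \<le> Fp q (z j) (real a)"
        unfolding e_def by (rule KI_lower[OF c1 c2])
      have U: "Fp q (z j) (real a) \<le> Fp q (z j) 1 ^ a"
        by (rule KI_upper) (use c1 in simp)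
      show "lo j n \<le> Fp (P n) x (real a) \<and> Fp (P n) x (real a) \<le> hi j n"
        unfolding lo_def hi_def base fa using L U \<psi>nn[of j] by (auto intro: mult_right_mono)
    qed
  next
    fix j assume j: "2 * a \<le> j"
    have "(\<lambda>n. Fp (P n) x 1 / \<phi> j) \<longlonglongrightarrow> c / \<phi> j"
      using c(1) x_def \<phi>pos[of j] by (intro tendsto_divide tendsto_const) auto
    moreover have "c / \<phi> j \<noteq> 0" using c(2) \<phi>pos[of j] by simp
    ultimately show "lo j \<longlonglongrightarrow> (c / \<phi> j) powr e j * \<psi> j"
      unfolding lo_def by (intro tendsto_mult tendsto_powr tendsto_const) auto
  next
    fix j assume j: "2 * a \<le> j"
    have "(\<lambda>n. Fp (P n) x 1 / \<phi> j) \<longlonglongrightarrow> c / \<phi> j"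
      using c(1) x_def \<phi>pos[of j] by (intro tendsto_divide tendsto_const) auto
    then show "hi j \<longlonglongrightarrow> (c / \<phi> j) ^ a * \<psi> j"
      unfolding hi_def by (intro tendsto_mult tendsto_power tendsto_const) auto
  next
    have el: "e \<longlonglongrightarrow> real a"
    proof -
      have "(\<lambda>j. 2 * real a ^ 2 / (real (wsize (z j)) + 1)) \<longlonglongrightarrow> 0"
        unfolding z_def by (rule inv_lim) simp
      then have "(\<lambda>j. real a + 2 * real a ^ 2 / (real (wsize (z j)) + 1)) \<longlonglongrightarrow> real a + 0"
        by (intro tendsto_add tendsto_const)
      then show ?thesis unfolding e_def by simp
    qed
    have "(\<lambda>j. c / \<phi> j) \<longlonglongrightarrow> c / PhiL v n0 1"
      using \<phi>lim \<phi>Lpos by (intro tendsto_divide tendsto_const) auto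
    moreover have "c / PhiL v n0 1 \<noteq> 0" using c(2) \<phi>Lpos by simp
    ultimately show "(\<lambda>j. (c / \<phi> j) powr e j * \<psi> j) \<longlonglongrightarrow> (c / PhiL v n0 1) powr real a * PhiL v n0 (real a)"
      using el \<psi>lim by (intro tendsto_mult tendsto_powr) auto
  next
    have "(\<lambda>j. c / \<phi> j) \<longlonglongrightarrow> c / PhiL v n0 1"
      using \<phi>lim \<phi>Lpos by (intro tendsto_divide tendsto_const) auto
    then have "(\<lambda>j. (c / \<phi> j) ^ a * \<psi> j) \<longlonglongrightarrow> (c / PhiL v n0 1) ^ a * PhiL v n0 (real a)"
      using \<psi>lim by (intro tendsto_mult tendsto_power) auto
    moreover have "(c / PhiL v n0 1) ^ a = (c / PhiL v n0 1) powr real a"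
      using c(2) \<phi>Lpos by (simp add: powr_realpow)
    ultimately show "(\<lambda>j. (c / \<phi> j) ^ a * \<psi> j) \<longlonglongrightarrow> (c / PhiL v n0 1) powr real a * PhiL v n0 (real a)"
      by simp
  qed
qed

lemma suffix_eq:
  assumes "k \<le> length y" "\<forall>p<k. rev y ! p = v p"
  shows "y = take (length y - k) y @ tk v k"
proof -
  have "take k (rev y) = map v [0..<k]"
    using assms by (intro nth_equalityI) auto
  then have "rev (drop (length y - k) y) = map v [0..<k]"
    using assms(1) by (simp add: rev_drop)
  then have "drop (length y - k) y = tk v k" unfolding tk_def by (metis rev_rev_ident)
  then show ?thesis by (metis append_take_drop_id)
qed

lemma main_limit:
  assumes r: "r \<ge> 1" and v: "wf_iword r v" and pv: "pi_inf v > 0" and b: "\<beta> > 0"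
    and w: "wf_word r w"
  shows "\<exists>L. \<forall>vs. adm r v \<beta> vs \<longrightarrow> (\<lambda>n. ratio r w (vs n)) \<longlonglongrightarrow> L"
proof -
  define n0 where "n0 = max 1 (wsize w)"
  define x where "x = tk v n0"
  have wx: "wsize x \<ge> n0" unfolding x_def by (rule tk_wsize)
  have x1: "wsize x \<ge> 1" "wsize w \<le> wsize x" using wx n0_def by auto
  obtain B where B: "\<And>p. Kr r w (p @ x) = (\<Sum>i\<in>{0..length w}. B i * Fp p x (real (wsize (drop i w))))"
    using LC[OF r w x1(2)] by blast
  define c where "c = \<beta> * pi_inf v / pi_fin x"
  have cpos: "c > 0" unfolding c_def using b pv pi_fin_pos[of x] by simp
  define Lim where "Lim i = (c / PhiL v n0 1) powr real (wsize (drop i w)) * PhiL v n0 (real (wsize (drop i w)))" for i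
  define L where "L = real (dpaths r [] w) * (\<Sum>i\<in>{0..length w}. B i * Lim i)"
  have "adm r v \<beta> vs \<longrightarrow> (\<lambda>n. ratio r w (vs n)) \<longlonglongrightarrow> L" for vs
  proof
    assume adm: "adm r v \<beta> vs"
    then have lw: "letterwise vs v" and pc: "(\<lambda>n. pi_fin (vs n)) \<longlonglongrightarrow> \<beta> * pi_inf v"
      unfolding adm_def by auto
    define P where "P n = take (length (vs n) - n0) (vs n)" for n
    have ev0: "eventually (\<lambda>n. vs n = P n @ x) sequentially"
    proof -
      have "eventually (\<lambda>n. n0 \<le> length (vs n) \<and> (\<forall>p<n0. rev (vs n) ! p = v p)) sequentially"
        using lw unfolding letterwise_def by blast
      then show ?thesis
        by (rule eventually_mono) (use suffix_eq in \<open>auto simp: P_def x_def\<close>)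
    qed
    have H1: "eventually (\<lambda>n. \<exists>q. P n = q @ mk v n0 (n0 + j)) sequentially" for j
    proof -
      have "eventually (\<lambda>n. vs n = take (length (vs n) - (n0 + j)) (vs n) @ tk v (n0 + j)) sequentially"
      proof -
        have "eventually (\<lambda>n. n0 + j \<le> length (vs n) \<and> (\<forall>p<n0 + j. rev (vs n) ! p = v p)) sequentially"
          using lw unfolding letterwise_def by blast
        then show ?thesis
          by (rule eventually_mono) (use suffix_eq in auto)
      qed
      then have "eventually (\<lambda>n. vs n = take (length (vs n) - (n0 + j)) (vs n) @ tk v (n0 + j) \<and> vs n = P n @ x) sequentially"
        using ev0 by (rule eventually_conj)
      then show ?thesis
      proof (rule eventually_mono)
        fix n assume "vs n = take (length (vs n) - (n0 + j)) (vs n) @ tk v (n0 + j) \<and> vs n = P n @ x"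
        then have a1: "vs n = take (length (vs n) - (n0 + j)) (vs n) @ tk v (n0 + j)" and a2: "vs n = P n @ x" by auto
        have "P n @ x = (take (length (vs n) - (n0 + j)) (vs n) @ mk v n0 (n0 + j)) @ x"
          using a1 a2 tk_split[of n0 "n0 + j" v] x_def by simp
        then show "\<exists>q. P n = q @ mk v n0 (n0 + j)" by blast
      qed
    qed
    have Fc: "(\<lambda>n. Fp (P n) x 1) \<longlonglongrightarrow> c"
    proof -
      have "(\<lambda>n. pi_fin (vs n) / pi_fin x) \<longlonglongrightarrow> c"
        unfolding c_def using pc pi_fin_pos[of x] by (intro tendsto_divide tendsto_const) auto
      moreover have "eventually (\<lambda>n. pi_fin (vs n) / pi_fin x = Fp (P n) x 1) sequentially"
        using ev0 by eventually_elim (use pi_fin_append[OF x1(1)] pi_fin_pos[of x] in simp)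
      ultimately show ?thesis by (rule Lim_transform_eventually)
    qed
    have Fi: "(\<lambda>n. Fp (P n) x (real (wsize (drop i w)))) \<longlonglongrightarrow> Lim i" for i
    proof -
      have "real (wsize (drop i w)) \<le> real (wsize (tk v n0))"
        using wsize_drop_le[of i w] x1(2) x_def by simp
      then show ?thesis unfolding Lim_def x_def
        by (intro Conv[where P = P]) (use x1 x_def Fc cpos H1 in auto)
    qed
    have "(\<lambda>n. real (dpaths r [] w) * (\<Sum>i\<in>{0..length w}. B i * Fp (P n) x (real (wsize (drop i w))))) \<longlonglongrightarrow> L"
      unfolding L_def by (intro tendsto_mult tendsto_const tendsto_sum Fi)
    moreover have "eventually (\<lambda>n. real (dpaths r [] w) * (\<Sum>i\<in>{0..length w}. B i * Fp (P n) x (real (wsize (drop i w))))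
        = ratio r w (vs n)) sequentially"
      using ev0 by eventually_elim (simp add: ratio_Kr B)
    ultimately show "(\<lambda>n. ratio r w (vs n)) \<longlonglongrightarrow> L" by (rule Lim_transform_eventually)
  qed
  then show ?thesis by blast
qed

lemma mu_eq:
  assumes ex: "\<exists>vs. adm r v \<beta> vs"
    and lim: "\<forall>vs. adm r v \<beta> vs \<longrightarrow> (\<lambda>n. ratio r w (vs n)) \<longlonglongrightarrow> L"
  shows "mu r v \<beta> w = L"
  unfolding mu_def
proof (rule the_equality)
  show "\<forall>vs. (\<forall>n. wf_word r (vs n)) \<and> letterwise vs v \<and> (\<lambda>n. pi_fin (vs n)) \<longlonglongrightarrow> \<beta> * pi_inf v \<longrightarrow>
       (\<lambda>n. real (dpaths r [] w) * real (dpaths r w (vs n)) / real (dpaths r [] (vs n))) \<longlonglongrightarrow> L"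
    using lim unfolding adm_def ratio_def by blast
next
  fix L' assume "\<forall>vs. (\<forall>n. wf_word r (vs n)) \<and> letterwise vs v \<and> (\<lambda>n. pi_fin (vs n)) \<longlonglongrightarrow> \<beta> * pi_inf v \<longrightarrow>
       (\<lambda>n. real (dpaths r [] w) * real (dpaths r w (vs n)) / real (dpaths r [] (vs n))) \<longlonglongrightarrow> L'"
  then have l': "\<forall>vs. adm r v \<beta> vs \<longrightarrow> (\<lambda>n. ratio r w (vs n)) \<longlonglongrightarrow> L'"
    unfolding adm_def ratio_def by blast
  obtain vs where "adm r v \<beta> vs" using ex by blast
  then show "L' = L" using l' lim LIMSEQ_unique by blast
qed

definition liftw :: "iword \<Rightarrow> word \<Rightarrow> word" where
  "liftw v y = rev (map (\<lambda>p. if rev y ! p = Two then Two else if v p = Two then One 1 else v p) [0..<length y])"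

lemma liftw_length[simp]: "length (liftw v y) = length y" by (simp add: liftw_def)

lemma liftw_nth: "p < length y \<Longrightarrow> rev (liftw v y) ! p = (if rev y ! p = Two then Two else if v p = Two then One 1 else v p)"
  by (simp add: liftw_def)

lemma rev_s_word: "rev (s_word z) = map sl (rev z)" by (simp add: s_word_def rev_map)

lemma liftw_s:
  assumes "wf_word 1 y"
  shows "s_word (liftw v y) = y"
proof -
  have "rev (s_word (liftw v y)) = rev y"
  proof (rule nth_equalityI)
    show "length (rev (s_word (liftw v y))) = length (rev y)" by (simp add: s_word_def)
  next
    fix p assume "p < length (rev (s_word (liftw v y)))"
    then have p: "p < length y" by (simp add: s_word_def)
    have "rev y ! p \<in> set y" using p by (metis length_rev nth_mem set_rev)
    then have ok: "letter_ok 1 (rev y ! p)" using assms by (simp add: wf_word_def)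
    have "rev (s_word (liftw v y)) ! p = sl (rev (liftw v y) ! p)" using p by (simp add: rev_s_word)
    also have "\<dots> = rev y ! p" using ok p by (cases "rev y ! p"; cases "v p") (auto simp: liftw_nth letter_ok_def)
    finally show "rev (s_word (liftw v y)) ! p = rev y ! p" .
  qed
  then show ?thesis by simp
qed

lemma liftw_wf:
  assumes "r \<ge> 1" "wf_iword r v"
  shows "wf_word r (liftw v y)"
proof -
  have "letter_ok r l" if "l \<in> set (liftw v y)" for l
  proof -
    from that obtain p where p: "p < length y"
      "l = (if rev y ! p = Two then Two else if v p = Two then One 1 else v p)"
      unfolding liftw_def by auto
    then show ?thesis using assms by (auto simp: wf_iword_def)
  qed
  then show ?thesis by (simp add: wf_word_def)
qed

lemma adm_s:
  assumes "adm r v \<beta> vs"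
  shows "adm 1 (s_iword v) \<beta> (\<lambda>n. s_word (vs n))"
  unfolding adm_def
proof (intro conjI allI)
  fix n show "wf_word 1 (s_word (vs n))" by (rule wf_s_word)
next
  show "letterwise (\<lambda>n. s_word (vs n)) (s_iword v)"
    using assms unfolding adm_def letterwise_def
  proof (intro allI)
    fix k assume "(\<forall>n. wf_word r (vs n)) \<and> (\<forall>k. \<forall>\<^sub>F n in sequentially. k \<le> length (vs n) \<and> (\<forall>p<k. rev (vs n) ! p = v p)) \<and>
      (\<lambda>n. pi_fin (vs n)) \<longlonglongrightarrow> \<beta> * pi_inf v"
    then have "\<forall>\<^sub>F n in sequentially. k \<le> length (vs n) \<and> (\<forall>p<k. rev (vs n) ! p = v p)" by blast
    then show "\<forall>\<^sub>F n in sequentially. k \<le> length (s_word (vs n)) \<and> (\<forall>p<k. rev (s_word (vs n)) ! p = s_iword v p)"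
      by (rule eventually_mono) (auto simp: rev_map s_iword_def s_word_def)
  qed
next
  show "(\<lambda>n. pi_fin (s_word (vs n))) \<longlonglongrightarrow> \<beta> * pi_inf (s_iword v)"
    using assms unfolding adm_def by (simp add: pi_fin_s pi_inf_s)
qed

lemma adm_lift:
  assumes "r \<ge> 1" "wf_iword r v" "adm 1 (s_iword v) \<beta> us"
  shows "adm r v \<beta> (\<lambda>n. liftw v (us n))"
  unfolding adm_def
proof (intro conjI allI)
  fix n show "wf_word r (liftw v (us n))" by (rule liftw_wf[OF assms(1,2)])
next
  have wf1: "wf_word 1 (us n)" for n using assms(3) unfolding adm_def by blast
  show "(\<lambda>n. pi_fin (liftw v (us n))) \<longlonglongrightarrow> \<beta> * pi_inf v"
  proof -
    have "pi_fin (liftw v (us n)) = pi_fin (us n)" for n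
      using pi_fin_s[of "liftw v (us n)"] liftw_s[OF wf1[of n]] by simp
    then show ?thesis using assms(3) unfolding adm_def by (simp add: pi_inf_s)
  qed
next
  show "letterwise (\<lambda>n. liftw v (us n)) v"
    unfolding letterwise_def
  proof
    fix k
    have "\<forall>\<^sub>F n in sequentially. k \<le> length (us n) \<and> (\<forall>p<k. rev (us n) ! p = s_iword v p)"
      using assms(3) unfolding adm_def letterwise_def by blast
    then show "\<forall>\<^sub>F n in sequentially. k \<le> length (liftw v (us n)) \<and> (\<forall>p<k. rev (liftw v (us n)) ! p = v p)"
    proof (rule eventually_mono)
      fix n assume a: "k \<le> length (us n) \<and> (\<forall>p<k. rev (us n) ! p = s_iword v p)"
      have "rev (liftw v (us n)) ! p = v p" if p: "p < k" for p
      proof -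
        have e: "rev (us n) ! p = sl (v p)" using a p by (simp add: s_iword_def)
        show ?thesis using p a by (cases "v p") (auto simp: liftw_nth e)
      qed
      then show "k \<le> length (liftw v (us n)) \<and> (\<forall>p<k. rev (liftw v (us n)) ! p = v p)" using a by simp
    qed
  qed
qed

theorem mainTheorem11:
  fixes r :: nat and v :: iword and \<beta> :: real and u :: word
  assumes "r \<ge> 2"
    and "v \<in> YF_plus r"
    and "0 < \<beta>" and "\<beta> \<le> 1"
    and "wf_word 1 u"
  shows "(\<Sum>w\<in>S_set r u. mu r v \<beta> w) = mu 1 (s_iword v) \<beta> u"
proof -
  have r1: "r \<ge> 1" using assms(1) by simp
  have v: "wf_iword r v" and pv: "pi_inf v > 0" using assms(2) by (auto simp: YF_plus_def)
  obtain vs0 where vs0: "adm r v \<beta> vs0" using exists_adm[OF v assms(3,4) pv] by blast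
  have muw: "\<forall>vs. adm r v \<beta> vs \<longrightarrow> (\<lambda>n. ratio r w (vs n)) \<longlonglongrightarrow> mu r v \<beta> w" if w: "w \<in> S_set r u" for w
  proof -
    have "wf_word r w" using w by (simp add: S_set_def)
    then obtain L where L: "\<forall>vs. adm r v \<beta> vs \<longrightarrow> (\<lambda>n. ratio r w (vs n)) \<longlonglongrightarrow> L"
      using main_limit[OF r1 v pv assms(3)] by blast
    have "mu r v \<beta> w = L" using mu_eq[OF _ L] vs0 by blast
    then show ?thesis using L by simp
  qed
  have "mu 1 (s_iword v) \<beta> u = (\<Sum>w\<in>S_set r u. mu r v \<beta> w)"
  proof (rule mu_eq)
    show "\<exists>vs. adm 1 (s_iword v) \<beta> vs" using adm_s[OF vs0] by blast
    show "\<forall>us. adm 1 (s_iword v) \<beta> us \<longrightarrow> (\<lambda>n. ratio 1 u (us n)) \<longlonglongrightarrow> (\<Sum>w\<in>S_set r u. mu r v \<beta> w)"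
    proof (intro allI impI)
      fix us assume us: "adm 1 (s_iword v) \<beta> us"
      define Y where "Y n = liftw v (us n)" for n
      have aY: "adm r v \<beta> Y" unfolding Y_def by (rule adm_lift[OF r1 v us])
      have wf1: "wf_word 1 (us n)" for n using us unfolding adm_def by blast
      have wfY: "wf_word r (Y n)" for n using aY unfolding adm_def by blast
      have eq: "ratio 1 u (us n) = (\<Sum>w\<in>S_set r u. ratio r w (Y n))" for n
        using FI[OF r1 wfY[of n] assms(5)] liftw_s[OF wf1[of n]] unfolding Y_def by simp
      have "(\<lambda>n. \<Sum>w\<in>S_set r u. ratio r w (Y n)) \<longlonglongrightarrow> (\<Sum>w\<in>S_set r u. mu r v \<beta> w)"
        using muw aY by (intro tendsto_sum) blast
      then show "(\<lambda>n. ratio 1 u (us n)) \<longlonglongrightarrow> (\<Sum>w\<in>S_set r u. mu r v \<beta> w)" unfolding eq .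
    qed
  qed
  then show ?thesis by simp
qed

end
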